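(* In the setting of the context, let $n=|X\setminus\delta X|$. For every $z\in\mathbb{C}$, $$\det(\chi\mathcal{M}_V\chi^*-zI)-(-1)^{n}\det(\chi\mathcal{M}_{-V}\chi^*+zI)=\sum_{H\in\mathcal{T}^{\triangle}(\Gamma;\delta X)}4^{b(H)}W_Q(z;H),$$ where $\mathcal{M}_{-V}=M-V$ (same edge weight $w$, potential $-V$).
   Context: Setting. $\Gamma=(X,A)$ is a finite connected symmetric digraph: each arc $a\in A$ has an origin $o(a)$ and a terminus $t(a)$, and there is a distinguished inverse arc $\bar a\in A$ with $o(\bar a)=t(a)$, $t(\bar a)=o(a)$, $\bar{\bar a}=a$; multiple arcs are allowed, self-loops are not. The undirected edge supporting $a$ is $|a|=|\bar a|$, and $E=\{|a|:a\in A\}$. A boundary $\delta X\subsetneq X$ (possibly empty) is fixed. Given $w:E\to\mathbb{C}$ and $V:X\to\mathbb{C}$, $(Mf)(u)=\sum_{a\in A,\,t(a)=u}w(|a|)f(o(a))$ and $\mathcal{M}_V=M+V$ ($V$ acting by multiplication). $\chi:\mathbb{C}^X\to\mathbb{C}^{X\setminus\delta X}$ is restriction, $\chi^*$ extension by zero. Put $\pi(u)=\sum_{a\in A,\,t(a)=u}w(|a|)$. Deformed graph. $\mathring\Gamma$ is the undirected multigraph with vertex set $X$ and edge set $E\cup S$, where $S=\{\sigma_u:u\in X\setminus\delta X\}$ and $\sigma_u$ is a self-loop at $u$. A self-loop counts as a cycle of length 1. A tree is connected with no cycle (isolated vertices are trees); an odd unicyclic graph is connected with exactly one cycle, of odd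 length (a tree with one self-loop qualifies). $\mathcal{H}_Q(\Gamma;\delta X)$ is the set of spanning subgraphs $H$ of $\mathring\Gamma$ each of whose connected components $W$ either contains exactly one vertex of $\delta X$ and is a tree, or contains no vertex of $\delta X$ and is odd unicyclic. $\mathcal{T}^{\triangle}(\Gamma;\delta X)$ is the set of $H\in\mathcal{H}_Q(\Gamma;\delta X)$ having at least one component whose cycle has length $\ge3$ (i.e. an odd unicyclic component without self-loop). $b(H)$ is the number of components of $H$ containing a cycle of length $\ge3$. Weights: $w_Q(z;e)=w(e)$ for $e\in E$, $w_Q(z;\sigma_u)=-z+V(u)-\pi(u)$, and $W_Q(z;H)=\prod_{e\in E(H)}w_Q(z;e)$ over all edges of $H$ including self-loops. *)

theory Defs
  imports Complex_Main "HOL-Combinatorics.Permutations"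
begin

(* Graph Gamma = (X, A) with origin og, terminus tm and arc reversal rv (a |-> a-bar).
   Undirected edge |a| is represented by the set {a, rv a}. *)

definition edge_of :: "('a \<Rightarrow> 'a) \<Rightarrow> 'a \<Rightarrow> 'a set" where
  "edge_of rv a = {a, rv a}"

definition sym_digraph :: "'v set \<Rightarrow> 'a set \<Rightarrow> ('a \<Rightarrow> 'v) \<Rightarrow> ('a \<Rightarrow> 'v) \<Rightarrow> ('a \<Rightarrow> 'a) \<Rightarrow> bool" where
  "sym_digraph X A og tm rv \<longleftrightarrow> finite X \<and> finite A \<and>
     (\<forall>a\<in>A. og a \<in> X \<and> tm a \<in> X \<and> rv a \<in> A \<and> og (rv a) = tm a \<and> tm (rv a) = og a
            \<and> rv (rv a) = a \<and> og a \<noteq> tm a)"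

definition digraph_connected :: "'v set \<Rightarrow> 'a set \<Rightarrow> ('a \<Rightarrow> 'v) \<Rightarrow> ('a \<Rightarrow> 'v) \<Rightarrow> bool" where
  "digraph_connected X A og tm \<longleftrightarrow>
     (\<forall>u\<in>X. \<forall>v\<in>X. (\<lambda>x y. \<exists>a\<in>A. og a = x \<and> tm a = y)\<^sup>*\<^sup>* u v)"

definition M_op :: "'a set \<Rightarrow> ('a \<Rightarrow> 'v) \<Rightarrow> ('a \<Rightarrow> 'v) \<Rightarrow> ('a \<Rightarrow> 'a) \<Rightarrow> ('a set \<Rightarrow> complex)
    \<Rightarrow> ('v \<Rightarrow> complex) \<Rightarrow> 'v \<Rightarrow> complex" where
  "M_op A og tm rv w f u = (\<Sum>a\<in>{a\<in>A. tm a = u}. w (edge_of rv a) * f (og a))"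

definition MV_op :: "'a set \<Rightarrow> ('a \<Rightarrow> 'v) \<Rightarrow> ('a \<Rightarrow> 'v) \<Rightarrow> ('a \<Rightarrow> 'a) \<Rightarrow> ('a set \<Rightarrow> complex)
    \<Rightarrow> ('v \<Rightarrow> complex) \<Rightarrow> ('v \<Rightarrow> complex) \<Rightarrow> 'v \<Rightarrow> complex" where
  "MV_op A og tm rv w V f u = M_op A og tm rv w f u + V u * f u"

(* matrix of chi T chi^* on the interior: entry (u,v) = (T (chi^* delta_v))(u) *)
definition op_matrix :: "(('v \<Rightarrow> complex) \<Rightarrow> 'v \<Rightarrow> complex) \<Rightarrow> 'v \<Rightarrow> 'v \<Rightarrow> complex" where
  "op_matrix T u v = T (\<lambda>x. if x = v then 1 else 0) u"

definition det_on :: "'v set \<Rightarrow> ('v \<Rightarrow> 'v \<Rightarrow> complex) \<Rightarrow> complex" where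
  "det_on S m = (\<Sum>p\<in>{p. p permutes S}. of_int (sign p) * (\<Prod>i\<in>S. m i (p i)))"

(* Deformed graph: original edges and self-loops sigma_u *)
datatype ('v, 'a) dedge = Ed "'a set" | Lp 'v

fun dends :: "('a \<Rightarrow> 'v) \<Rightarrow> ('v, 'a) dedge \<Rightarrow> 'v set" where
  "dends og (Ed e) = og ` e"
| "dends og (Lp v) = {v}"

definition dedges :: "'v set \<Rightarrow> 'v set \<Rightarrow> 'a set \<Rightarrow> ('a \<Rightarrow> 'a) \<Rightarrow> ('v, 'a) dedge set" where
  "dedges X dX A rv = Ed ` (edge_of rv ` A) \<union> Lp ` (X - dX)"

definition is_cycle :: "('a \<Rightarrow> 'v) \<Rightarrow> ('v, 'a) dedge set \<Rightarrow> ('v, 'a) dedge set \<Rightarrow> bool" where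
  "is_cycle og F C \<longleftrightarrow> C \<subseteq> F \<and> (\<exists>vs es. length vs \<ge> 1 \<and> length es = length vs \<and>
      distinct vs \<and> distinct es \<and> set es = C \<and>
      (\<forall>i<length vs. dends og (es ! i) = {vs ! i, vs ! ((i + 1) mod length vs)}))"

definition cycles :: "('a \<Rightarrow> 'v) \<Rightarrow> ('v, 'a) dedge set \<Rightarrow> ('v, 'a) dedge set set" where
  "cycles og F = {C. is_cycle og F C}"

definition comp_vertices :: "'v set \<Rightarrow> ('a \<Rightarrow> 'v) \<Rightarrow> ('v, 'a) dedge set \<Rightarrow> 'v \<Rightarrow> 'v set" where
  "comp_vertices X og F u = {v\<in>X. (\<lambda>x y. \<exists>e\<in>F. dends og e = {x, y})\<^sup>*\<^sup>* u v}"

definition components :: "'v set \<Rightarrow> ('a \<Rightarrow> 'v) \<Rightarrow> ('v, 'a) dedge set \<Rightarrow> 'v set set" where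
  "components X og F = comp_vertices X og F ` X"

definition comp_edges :: "('a \<Rightarrow> 'v) \<Rightarrow> ('v, 'a) dedge set \<Rightarrow> 'v set \<Rightarrow> ('v, 'a) dedge set" where
  "comp_edges og F W = {e\<in>F. dends og e \<subseteq> W}"

definition HQ :: "'v set \<Rightarrow> 'v set \<Rightarrow> 'a set \<Rightarrow> ('a \<Rightarrow> 'v) \<Rightarrow> ('a \<Rightarrow> 'a) \<Rightarrow> ('v, 'a) dedge set set" where
  "HQ X dX A og rv = {F. F \<subseteq> dedges X dX A rv \<and>
     (\<forall>W\<in>components X og F.
        (card (W \<inter> dX) = 1 \<and> cycles og (comp_edges og F W) = {}) \<or>
        (W \<inter> dX = {} \<and> (\<exists>C. cycles og (comp_edges og F W) = {C} \<and> odd (card C))))}"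

definition Ttri :: "'v set \<Rightarrow> 'v set \<Rightarrow> 'a set \<Rightarrow> ('a \<Rightarrow> 'v) \<Rightarrow> ('a \<Rightarrow> 'a) \<Rightarrow> ('v, 'a) dedge set set" where
  "Ttri X dX A og rv = {F\<in>HQ X dX A og rv.
     \<exists>W\<in>components X og F. \<exists>C\<in>cycles og (comp_edges og F W). card C \<ge> 3}"

definition bnum :: "'v set \<Rightarrow> ('a \<Rightarrow> 'v) \<Rightarrow> ('v, 'a) dedge set \<Rightarrow> nat" where
  "bnum X og F = card {W\<in>components X og F. \<exists>C\<in>cycles og (comp_edges og F W). card C \<ge> 3}"

definition piw :: "'a set \<Rightarrow> ('a \<Rightarrow> 'v) \<Rightarrow> ('a \<Rightarrow> 'a) \<Rightarrow> ('a set \<Rightarrow> complex) \<Rightarrow> 'v \<Rightarrow> complex" where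
  "piw A tm rv w u = (\<Sum>a\<in>{a\<in>A. tm a = u}. w (edge_of rv a))"

fun wQ :: "'a set \<Rightarrow> ('a \<Rightarrow> 'v) \<Rightarrow> ('a \<Rightarrow> 'a) \<Rightarrow> ('a set \<Rightarrow> complex) \<Rightarrow> ('v \<Rightarrow> complex)
    \<Rightarrow> complex \<Rightarrow> ('v, 'a) dedge \<Rightarrow> complex" where
  "wQ A tm rv w V z (Ed e) = w e"
| "wQ A tm rv w V z (Lp u) = - z + V u - piw A tm rv w u"

definition WQ :: "'a set \<Rightarrow> ('a \<Rightarrow> 'v) \<Rightarrow> ('a \<Rightarrow> 'a) \<Rightarrow> ('a set \<Rightarrow> complex) \<Rightarrow> ('v \<Rightarrow> complex)
    \<Rightarrow> complex \<Rightarrow> ('v, 'a) dedge set \<Rightarrow> complex" where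
  "WQ A tm rv w V z F = (\<Prod>e\<in>F. wQ A tm rv w V z e)"

end

theory Submission
  imports Defs "HOL-Library.FuncSet" "HOL-Combinatorics.Cycles"
begin

lemma det_on_noninj_zero:
  fixes N :: "'v \<Rightarrow> 'e \<Rightarrow> complex"
  assumes fin: "finite I" and a: "a \<in> I" and b: "b \<in> I" and ab: "a \<noteq> b" and fab: "f a = f b"
  shows "(\<Sum>p\<in>{p. p permutes I}. of_int (sign p) * (\<Prod>u\<in>I. N (p u) (f u))) = 0"
proof -
  let ?t = "Transposition.transpose a b"
  have tp: "?t permutes I" using a b by (simp add: permutes_swap_id)
  let ?g = "\<lambda>p. of_int (sign p) * (\<Prod>u\<in>I. N (p u) (f u)) :: complex"
  have 1: "sum ?g {p. p permutes I} = sum (\<lambda>p. ?g (p \<circ> ?t)) {p. p permutes I}"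
    by (rule sum_permutations_compose_right[OF tp])
  have 2: "?g (p \<circ> ?t) = - ?g p" if pp: "p permutes I" for p
  proof -
    have perm: "permutation p" using pp fin permutation_permutes by blast
    have s: "sign (p \<circ> ?t) = - sign p"
      using sign_compose[OF perm permutation_swap_id] ab by (simp add: sign_swap_id)
    have "(\<Prod>u\<in>I. N ((p \<circ> ?t) u) (f u)) = (\<Prod>u\<in>I. N (p (?t u)) (f (?t u)))"
    proof (rule prod.cong[OF refl])
      fix u assume "u \<in> I"
      show "N ((p \<circ> ?t) u) (f u) = N (p (?t u)) (f (?t u))"
        using fab by (auto simp: Transposition.transpose_def)
    qed
    also have "\<dots> = (\<Prod>u\<in>I. N (p u) (f u))"
      using prod.reindex_bij_betw[OF permutes_imp_bij[OF tp], of "\<lambda>u. N (p u) (f u)"] by simp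
    finally show ?thesis using s by simp
  qed
  have "sum ?g {p. p permutes I} = - sum ?g {p. p permutes I}"
    using 1 2 by (simp add: sum_negf)
  thus ?thesis by simp
qed

lemma cauchy_binet_gen:
  fixes N :: "'v \<Rightarrow> 'e \<Rightarrow> complex" and c :: "'e \<Rightarrow> complex"
  assumes fI: "finite I" and fD: "finite D"
  shows "det_on I (\<lambda>u v. \<Sum>e\<in>D. N u e * c e * N v e) =
    (\<Sum>F\<in>Pow D. (\<Prod>e\<in>F. c e) *
       (\<Sum>f\<in>{f\<in>I \<rightarrow>\<^sub>E D. inj_on f I \<and> f ` I = F}.
          \<Sum>p\<in>{p. p permutes I}. of_int (sign p) * (\<Prod>u\<in>I. N u (f u) * N (p u) (f u))))"
proof -
  let ?P = "{p. p permutes I}"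
  let ?T = "\<lambda>f p. of_int (sign p) * (\<Prod>u\<in>I. N u (f u) * c (f u) * N (p u) (f u)) :: complex"
  have finP: "finite ?P" using fI finite_permutations by blast
  have finPi: "finite (I \<rightarrow>\<^sub>E D)" using fI fD by (simp add: finite_PiE)
  have "det_on I (\<lambda>u v. \<Sum>e\<in>D. N u e * c e * N v e) =
      (\<Sum>p\<in>?P. of_int (sign p) * (\<Sum>f\<in>I \<rightarrow>\<^sub>E D. \<Prod>u\<in>I. N u (f u) * c (f u) * N (p u) (f u)))"
    unfolding det_on_def
    by (rule sum.cong[OF refl]) (simp add: prod_sum_PiE[OF fI] fD)
  also have "\<dots> = (\<Sum>p\<in>?P. \<Sum>f\<in>I \<rightarrow>\<^sub>E D. ?T f p)"
    by (simp add: sum_distrib_left)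
  also have "\<dots> = (\<Sum>f\<in>I \<rightarrow>\<^sub>E D. \<Sum>p\<in>?P. ?T f p)"
    by (rule sum.swap)
  also have "\<dots> = (\<Sum>f\<in>{f\<in>I \<rightarrow>\<^sub>E D. inj_on f I}. \<Sum>p\<in>?P. ?T f p)"
  proof (rule sum.mono_neutral_right[OF finPi])
    show "{f \<in> I \<rightarrow>\<^sub>E D. inj_on f I} \<subseteq> I \<rightarrow>\<^sub>E D" by auto
    show "\<forall>f\<in>(I \<rightarrow>\<^sub>E D) - {f \<in> I \<rightarrow>\<^sub>E D. inj_on f I}. (\<Sum>p\<in>?P. ?T f p) = 0"
    proof
      fix f assume "f \<in> (I \<rightarrow>\<^sub>E D) - {f \<in> I \<rightarrow>\<^sub>E D. inj_on f I}"
      then obtain a b where a: "a \<in> I" and b: "b \<in> I" and ab: "a \<noteq> b" and fab: "f a = f b"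
        unfolding inj_on_def by auto
      have "(\<Sum>p\<in>?P. ?T f p) = (\<Prod>u\<in>I. N u (f u) * c (f u)) *
          (\<Sum>p\<in>?P. of_int (sign p) * (\<Prod>u\<in>I. N (p u) (f u)))"
        by (simp add: sum_distrib_left prod.distrib mult_ac)
      also have "\<dots> = 0" using det_on_noninj_zero[OF fI a b ab fab] by simp
      finally show "(\<Sum>p\<in>?P. ?T f p) = 0" .
    qed
  qed
  also have "\<dots> = (\<Sum>F\<in>Pow D. \<Sum>f\<in>{f\<in>I \<rightarrow>\<^sub>E D. inj_on f I \<and> f ` I = F}. \<Sum>p\<in>?P. ?T f p)"
  proof -
    have seteq: "\<And>F. {x\<in>{f\<in>I \<rightarrow>\<^sub>E D. inj_on f I}. x ` I = F} = {f\<in>I \<rightarrow>\<^sub>E D. inj_on f I \<and> f ` I = F}" by blast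
    have fin2: "finite {f\<in>I \<rightarrow>\<^sub>E D. inj_on f I}" using finPi by simp
    have "(\<Sum>f\<in>{f\<in>I \<rightarrow>\<^sub>E D. inj_on f I}. \<Sum>p\<in>?P. ?T f p) =
      (\<Sum>F\<in>(\<lambda>f. f ` I) ` {f\<in>I \<rightarrow>\<^sub>E D. inj_on f I}. \<Sum>f\<in>{x\<in>{f\<in>I \<rightarrow>\<^sub>E D. inj_on f I}. x ` I = F}. \<Sum>p\<in>?P. ?T f p)"
      by (rule sum.image_gen[OF fin2])
    also have "\<dots> = (\<Sum>F\<in>Pow D. \<Sum>f\<in>{x\<in>{f\<in>I \<rightarrow>\<^sub>E D. inj_on f I}. x ` I = F}. \<Sum>p\<in>?P. ?T f p)"
    proof (rule sum.mono_neutral_left)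
      show "finite (Pow D)" using fD by simp
      show "(\<lambda>f. f ` I) ` {f \<in> I \<rightarrow>\<^sub>E D. inj_on f I} \<subseteq> Pow D" by (auto simp: PiE_def)
      show "\<forall>F\<in>Pow D - (\<lambda>f. f ` I) ` {f \<in> I \<rightarrow>\<^sub>E D. inj_on f I}.
          (\<Sum>f\<in>{x\<in>{f\<in>I \<rightarrow>\<^sub>E D. inj_on f I}. x ` I = F}. \<Sum>p\<in>?P. ?T f p) = 0"
    proof
      fix F assume "F \<in> Pow D - (\<lambda>f. f ` I) ` {f \<in> I \<rightarrow>\<^sub>E D. inj_on f I}"
      then have "{x\<in>{f\<in>I \<rightarrow>\<^sub>E D. inj_on f I}. x ` I = F} = {}" by blast
      thus "(\<Sum>f\<in>{x\<in>{f\<in>I \<rightarrow>\<^sub>E D. inj_on f I}. x ` I = F}. \<Sum>p\<in>?P. ?T f p) = 0" by (simp only: sum.empty)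
    qed
    qed
    finally show ?thesis unfolding seteq .
  qed
  also have "\<dots> = (\<Sum>F\<in>Pow D. (\<Prod>e\<in>F. c e) *
       (\<Sum>f\<in>{f\<in>I \<rightarrow>\<^sub>E D. inj_on f I \<and> f ` I = F}.
          \<Sum>p\<in>?P. of_int (sign p) * (\<Prod>u\<in>I. N u (f u) * N (p u) (f u))))"
  proof (rule sum.cong[OF refl])
    fix F assume "F \<in> Pow D"
    show "(\<Sum>f\<in>{f\<in>I \<rightarrow>\<^sub>E D. inj_on f I \<and> f ` I = F}. \<Sum>p\<in>?P. ?T f p) =
      (\<Prod>e\<in>F. c e) * (\<Sum>f\<in>{f\<in>I \<rightarrow>\<^sub>E D. inj_on f I \<and> f ` I = F}.
          \<Sum>p\<in>?P. of_int (sign p) * (\<Prod>u\<in>I. N u (f u) * N (p u) (f u)))"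
      unfolding sum_distrib_left
    proof (rule sum.cong[OF refl])
      fix f assume f: "f \<in> {f\<in>I \<rightarrow>\<^sub>E D. inj_on f I \<and> f ` I = F}"
      have cp: "(\<Prod>u\<in>I. c (f u)) = (\<Prod>e\<in>F. c e)"
        using prod.reindex[of f I c] f by simp
      show "(\<Sum>p\<in>?P. ?T f p) = (\<Sum>p\<in>?P. (\<Prod>e\<in>F. c e) * (of_int (sign p) * (\<Prod>u\<in>I. N u (f u) * N (p u) (f u))))"
      proof (rule sum.cong[OF refl])
        fix p
        have "(\<Prod>u\<in>I. N u (f u) * c (f u) * N (p u) (f u)) = (\<Prod>u\<in>I. c (f u)) * (\<Prod>u\<in>I. N u (f u) * N (p u) (f u))"
          by (simp add: prod.distrib[symmetric] mult_ac)
        thus "?T f p = (\<Prod>e\<in>F. c e) * (of_int (sign p) * (\<Prod>u\<in>I. N u (f u) * N (p u) (f u)))"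
          using cp by simp
      qed
    qed
  qed
  finally show ?thesis .
qed


lemma det_on_cong:
  assumes "\<And>u v. u \<in> S \<Longrightarrow> v \<in> S \<Longrightarrow> m u v = m' u v"
  shows "det_on S m = det_on S m'"
  unfolding det_on_def
proof (rule sum.cong[OF refl])
  fix p assume "p \<in> {p. p permutes S}"
  hence pS: "\<And>i. i \<in> S \<Longrightarrow> p i \<in> S" by (simp add: permutes_in_image)
  have "(\<Prod>i\<in>S. m i (p i)) = (\<Prod>i\<in>S. m' i (p i))"
    by (rule prod.cong[OF refl]) (simp add: assms pS)
  thus "of_int (sign p) * (\<Prod>i\<in>S. m i (p i)) = of_int (sign p) * (\<Prod>i\<in>S. m' i (p i))"
    by simp
qed

lemma det_on_neg:
  assumes "finite S"
  shows "det_on S (\<lambda>u v. - m u v) = (-1) ^ card S * det_on S m"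
  unfolding det_on_def sum_distrib_left
proof (rule sum.cong[OF refl])
  fix p
  have "(\<Prod>i\<in>S. - m i (p i)) = (\<Prod>i\<in>S. (-1) * m i (p i))" by simp
  also have "\<dots> = (\<Prod>i\<in>S. (-1::complex)) * (\<Prod>i\<in>S. m i (p i))" by (rule prod.distrib)
  also have "\<dots> = (-1) ^ card S * (\<Prod>i\<in>S. m i (p i))" by simp
  finally show "of_int (sign p) * (\<Prod>i\<in>S. - m i (p i)) = (-1) ^ card S * (of_int (sign p) * (\<Prod>i\<in>S. m i (p i)))"
    by simp
qed

locale setting =
  fixes X dX :: "'v set" and A :: "'a set" and og tm :: "'a \<Rightarrow> 'v" and rv :: "'a \<Rightarrow> 'a"
  assumes sd: "sym_digraph X A og tm rv" and dXX: "dX \<subseteq> X"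
begin

abbreviation "I \<equiv> X - dX"
abbreviation "D \<equiv> dedges X dX A rv"

lemma finX: "finite X" and finA: "finite A"
  using sd by (auto simp: sym_digraph_def)

lemma arc: "a \<in> A \<Longrightarrow> og a \<in> X \<and> tm a \<in> X \<and> rv a \<in> A \<and> og (rv a) = tm a \<and> tm (rv a) = og a
            \<and> rv (rv a) = a \<and> og a \<noteq> tm a"
  using sd by (auto simp: sym_digraph_def)

lemma finI: "finite I" using finX by simp

lemma finD: "finite D"
  unfolding dedges_def using finA finX by simp

lemma dends_Ed: "a \<in> A \<Longrightarrow> dends og (Ed (edge_of rv a)) = {og a, tm a}"
  using arc[of a] by (simp add: edge_of_def)

lemma edge_of_rv: "a \<in> A \<Longrightarrow> edge_of rv (rv a) = edge_of rv a"
  using arc[of a] by (auto simp: edge_of_def)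

lemma D_cases:
  assumes "e \<in> D"
  obtains (E) a where "a \<in> A" "e = Ed (edge_of rv a)" | (L) v where "v \<in> I" "e = Lp v"
  using assms unfolding dedges_def by blast

lemma dends_sub: "e \<in> D \<Longrightarrow> dends og e \<subseteq> X"
proof (erule D_cases)
  fix a assume "a \<in> A" "e = Ed (edge_of rv a)"
  thus ?thesis by (simp add: dends_Ed arc del: dends.simps)
next
  fix v assume "v \<in> I" "e = Lp v" thus ?thesis by simp
qed

lemma dends_two:
  assumes "e \<in> D" "x \<in> dends og e"
  shows "\<exists>y. dends og e = {x, y}"
  using assms(1)
proof (cases rule: D_cases)
  case (E a) thus ?thesis using assms(2) by (auto simp: dends_Ed simp del: dends.simps)
next
  case (L v) thus ?thesis using assms(2) by auto
qed

lemma dends_single: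
  assumes "e \<in> D" "dends og e = {x}"
  shows "e = Lp x"
  using assms(1)
proof (cases rule: D_cases)
  case (E a) thus ?thesis using assms(2) arc[of a] by (auto simp: dends_Ed doubleton_eq_iff simp del: dends.simps)
next
  case (L v) thus ?thesis using assms(2) by auto
qed

lemma Lp_in_D: "Lp v \<in> D \<longleftrightarrow> v \<in> I"
  unfolding dedges_def by auto

lemma og_edge: "a \<in> A \<Longrightarrow> og ` edge_of rv a = {og a, tm a}"
  using arc[of a] by (simp add: edge_of_def)

lemma dends_nonempty: "e \<in> D \<Longrightarrow> dends og e \<noteq> {}"
  by (erule D_cases) (auto simp: og_edge)

definition rep :: "'a set \<Rightarrow> 'a" where
  "rep E = (SOME a. a \<in> A \<and> edge_of rv a = E)"

lemma rep_prop:
  assumes "a \<in> A"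
  shows "rep (edge_of rv a) \<in> A \<and> (rep (edge_of rv a) = a \<or> rep (edge_of rv a) = rv a)"
proof -
  have "\<exists>b. b \<in> A \<and> edge_of rv b = edge_of rv a" using assms by blast
  hence r: "rep (edge_of rv a) \<in> A \<and> edge_of rv (rep (edge_of rv a)) = edge_of rv a"
    unfolding rep_def by (rule someI_ex)
  hence "rep (edge_of rv a) \<in> edge_of rv a" by (auto simp: edge_of_def)
  thus ?thesis using r by (auto simp: edge_of_def)
qed

definition Nq :: "'v \<Rightarrow> ('v, 'a) dedge \<Rightarrow> complex" where
  "Nq u e = (if u \<in> dends og e then 1 else 0)"

definition Ns :: "'v \<Rightarrow> ('v, 'a) dedge \<Rightarrow> complex" where
  "Ns u e = (case e of Ed E \<Rightarrow> (if u = tm (rep E) then 1 else if u = og (rep E) then -1 else 0)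
                     | Lp v \<Rightarrow> (if u = v then 1 else 0))"

lemma Ns_Ed_prod:
  assumes "a \<in> A"
  shows "Ns u (Ed (edge_of rv a)) * Ns v (Ed (edge_of rv a)) =
     (if u \<in> {og a, tm a} \<and> v \<in> {og a, tm a} then (if u = v then 1 else -1) else 0)"
proof -
  have r: "rep (edge_of rv a) = a \<or> rep (edge_of rv a) = rv a" using rep_prop[OF assms] by blast
  have a: "og (rv a) = tm a" "tm (rv a) = og a" "og a \<noteq> tm a" using arc[OF assms] by auto
  show ?thesis
  proof (cases "rep (edge_of rv a) = a")
    case True thus ?thesis using a by (auto simp: Ns_def)
  next
    case False hence "rep (edge_of rv a) = rv a" using r by blast
    thus ?thesis using a by (auto simp: Ns_def)
  qed
qed

lemma Ns_prod:
  assumes "e \<in> D"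
  shows "Ns u e * Ns v e = (if u \<in> dends og e \<and> v \<in> dends og e then (if u = v then 1 else -1) else 0)"
  using assms
proof (cases rule: D_cases)
  case (E a) thus ?thesis using Ns_Ed_prod[of a u v] by (simp add: og_edge)
next
  case (L x) thus ?thesis by (simp add: Ns_def)
qed

lemma Nq_prod: "Nq u e * Nq v e = (if u \<in> dends og e \<and> v \<in> dends og e then 1 else 0)"
  by (simp add: Nq_def)

lemma sum_D:
  "(\<Sum>e\<in>D. g e) = (\<Sum>E\<in>edge_of rv ` A. g (Ed E)) + (\<Sum>x\<in>I. g (Lp x))"
proof -
  have "(\<Sum>e\<in>D. g e) = (\<Sum>e\<in>Ed ` (edge_of rv ` A). g e) + (\<Sum>e\<in>Lp ` I. g e)"
    unfolding dedges_def by (rule sum.union_disjoint) (use finA finX in auto)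
  also have "\<dots> = (\<Sum>E\<in>edge_of rv ` A. g (Ed E)) + (\<Sum>x\<in>I. g (Lp x))"
    by (simp add: sum.reindex inj_on_def)
  finally show ?thesis .
qed

lemma sum_edges_at:
  assumes "\<And>E. E \<in> edge_of rv ` A \<Longrightarrow> u \<notin> og ` E \<Longrightarrow> g E = 0"
  shows "(\<Sum>E\<in>edge_of rv ` A. g E) = (\<Sum>a\<in>{a\<in>A. tm a = u}. g (edge_of rv a))"
proof -
  have inj: "inj_on (edge_of rv) {a\<in>A. tm a = u}"
  proof (rule inj_onI)
    fix a b assume a: "a \<in> {a\<in>A. tm a = u}" and b: "b \<in> {a\<in>A. tm a = u}" and e: "edge_of rv a = edge_of rv b"
    hence "a = b \<or> a = rv b" by (auto simp: edge_of_def doubleton_eq_iff)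
    thus "a = b" using a b arc[of b] by auto
  qed
  have img: "edge_of rv ` {a\<in>A. tm a = u} = {E\<in>edge_of rv ` A. u \<in> og ` E}"
  proof
    show "edge_of rv ` {a\<in>A. tm a = u} \<subseteq> {E\<in>edge_of rv ` A. u \<in> og ` E}"
      using arc by (force simp: edge_of_def)
    show "{E\<in>edge_of rv ` A. u \<in> og ` E} \<subseteq> edge_of rv ` {a\<in>A. tm a = u}"
    proof
      fix E assume "E \<in> {E\<in>edge_of rv ` A. u \<in> og ` E}"
      then obtain a where a: "a \<in> A" "E = edge_of rv a" "u \<in> og ` E" by blast
      hence "u = og a \<or> u = tm a" using arc[of a] by (auto simp: edge_of_def)
      thus "E \<in> edge_of rv ` {a\<in>A. tm a = u}"
      proof
        assume "u = og a" thus ?thesis using a arc[of a] edge_of_rv[of a]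
          by (metis (mono_tags, lifting) image_eqI mem_Collect_eq)
      next
        assume "u = tm a" thus ?thesis using a by blast
      qed
    qed
  qed
  have "(\<Sum>E\<in>edge_of rv ` A. g E) = (\<Sum>E\<in>{E\<in>edge_of rv ` A. u \<in> og ` E}. g E)"
    by (rule sum.mono_neutral_right) (use finA assms in auto)
  also have "\<dots> = (\<Sum>a\<in>{a\<in>A. tm a = u}. g (edge_of rv a))"
    unfolding img[symmetric] by (simp add: sum.reindex[OF inj])
  finally show ?thesis .
qed

end

context
  fixes X dX :: "'v set" and A :: "'a set" and og tm :: "'a \<Rightarrow> 'v" and rv :: "'a \<Rightarrow> 'a"
    and w :: "'a set \<Rightarrow> complex" and V :: "'v \<Rightarrow> complex" and z :: complex
  assumes S: "setting X dX A og tm rv"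
begin

interpretation setting X dX A og tm rv by (rule S)

lemma op_matrix_eq:
  "op_matrix (MV_op A og tm rv w V) u v =
     (\<Sum>a\<in>{a\<in>A. tm a = u}. (if og a = v then w (edge_of rv a) else 0)) + (if u = v then V u else 0)"
  unfolding op_matrix_def MV_op_def M_op_def by (auto intro: sum.cong)

lemma matrix_q:
  assumes u: "u \<in> I" and v: "v \<in> I"
  shows "(\<Sum>e\<in>D. Nq u e * wQ A tm rv w V z e * Nq v e) =
     op_matrix (MV_op A og tm rv w V) u v - (if u = v then z else 0)"
proof -
  have loops: "(\<Sum>x\<in>I. Nq u (Lp x) * wQ A tm rv w V z (Lp x) * Nq v (Lp x)) =
      (if u = v then wQ A tm rv w V z (Lp u) else 0)"
  proof -
    have "\<And>x. Nq u (Lp x) * wQ A tm rv w V z (Lp x) * Nq v (Lp x) = (if x = u then (if u = v then wQ A tm rv w V z (Lp u) else 0) else 0)"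
      by (simp add: Nq_def del: wQ.simps)
    thus ?thesis using u finI by (simp del: wQ.simps)
  qed
  have edges: "(\<Sum>E\<in>edge_of rv ` A. Nq u (Ed E) * wQ A tm rv w V z (Ed E) * Nq v (Ed E)) =
      (\<Sum>a\<in>{a\<in>A. tm a = u}. (if og a = v \<or> v = u then w (edge_of rv a) else 0))"
  proof -
    have "(\<Sum>E\<in>edge_of rv ` A. Nq u (Ed E) * wQ A tm rv w V z (Ed E) * Nq v (Ed E)) =
       (\<Sum>a\<in>{a\<in>A. tm a = u}. Nq u (Ed (edge_of rv a)) * wQ A tm rv w V z (Ed (edge_of rv a)) * Nq v (Ed (edge_of rv a)))"
      by (rule sum_edges_at) (simp add: Nq_def)
    also have "\<dots> = (\<Sum>a\<in>{a\<in>A. tm a = u}. (if og a = v \<or> v = u then w (edge_of rv a) else 0))"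
      by (rule sum.cong[OF refl]) (auto simp: Nq_def og_edge)
    finally show ?thesis .
  qed
  show ?thesis
  proof (cases "u = v")
    case True
    have "(\<Sum>a\<in>{a\<in>A. tm a = u}. (if og a = u then w (edge_of rv a) else 0)) = 0"
      by (rule sum.neutral) (auto dest: arc)
    thus ?thesis using True unfolding sum_D edges loops op_matrix_eq
      by (simp add: piw_def)
  next
    case False
    thus ?thesis unfolding sum_D edges loops op_matrix_eq by simp
  qed
qed

lemma matrix_s:
  assumes u: "u \<in> I" and v: "v \<in> I"
  shows "(\<Sum>e\<in>D. Ns u e * wQ A tm rv w V z e * Ns v e) =
     - (op_matrix (MV_op A og tm rv w (\<lambda>x. - V x)) u v + (if u = v then z else 0))"
proof -
  have loops: "(\<Sum>x\<in>I. Ns u (Lp x) * wQ A tm rv w V z (Lp x) * Ns v (Lp x)) =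
      (if u = v then wQ A tm rv w V z (Lp u) else 0)"
  proof -
    have "\<And>x. Ns u (Lp x) * wQ A tm rv w V z (Lp x) * Ns v (Lp x) = (if x = u then (if u = v then wQ A tm rv w V z (Lp u) else 0) else 0)"
      by (simp add: Ns_def del: wQ.simps)
    thus ?thesis using u finI by (simp del: wQ.simps)
  qed
  have edges: "(\<Sum>E\<in>edge_of rv ` A. Ns u (Ed E) * wQ A tm rv w V z (Ed E) * Ns v (Ed E)) =
      (\<Sum>a\<in>{a\<in>A. tm a = u}. (if v = u then w (edge_of rv a) else if og a = v then - w (edge_of rv a) else 0))"
  proof -
    have "(\<Sum>E\<in>edge_of rv ` A. Ns u (Ed E) * wQ A tm rv w V z (Ed E) * Ns v (Ed E)) =
       (\<Sum>a\<in>{a\<in>A. tm a = u}. Ns u (Ed (edge_of rv a)) * wQ A tm rv w V z (Ed (edge_of rv a)) * Ns v (Ed (edge_of rv a)))"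
    proof (rule sum_edges_at)
      fix E assume "E \<in> edge_of rv ` A" "u \<notin> og ` E"
      then obtain a where a: "a \<in> A" "E = edge_of rv a" "u \<notin> {og a, tm a}" using og_edge by blast
      have "Ns u (Ed E) * Ns u (Ed E) = 0"
        using Ns_Ed_prod[OF a(1), of u u] a by simp
      thus "Ns u (Ed E) * wQ A tm rv w V z (Ed E) * Ns v (Ed E) = 0" by simp
    qed
    also have "\<dots> = (\<Sum>a\<in>{a\<in>A. tm a = u}. (if v = u then w (edge_of rv a) else if og a = v then - w (edge_of rv a) else 0))"
    proof (rule sum.cong[OF refl])
      fix a assume a: "a \<in> {a\<in>A. tm a = u}"
      have "Ns u (Ed (edge_of rv a)) * Ns v (Ed (edge_of rv a)) =
        (if v = u then 1 else if og a = v then -1 else 0)"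
        using Ns_Ed_prod[of a u v] a arc[of a] by auto
      thus "Ns u (Ed (edge_of rv a)) * wQ A tm rv w V z (Ed (edge_of rv a)) * Ns v (Ed (edge_of rv a)) =
        (if v = u then w (edge_of rv a) else if og a = v then - w (edge_of rv a) else 0)"
        by (simp add: algebra_simps split: if_splits)
    qed
    finally show ?thesis .
  qed
  have opm: "op_matrix (MV_op A og tm rv w (\<lambda>x. - V x)) u v =
     (\<Sum>a\<in>{a\<in>A. tm a = u}. (if og a = v then w (edge_of rv a) else 0)) + (if u = v then - V u else 0)"
    unfolding op_matrix_def MV_op_def M_op_def by (auto intro: sum.cong)
  show ?thesis
  proof (cases "u = v")
    case True
    have "(\<Sum>a\<in>{a\<in>A. tm a = u}. (if og a = u then w (edge_of rv a) else 0)) = 0"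
      by (rule sum.neutral) (auto dest: arc)
    thus ?thesis using True unfolding sum_D edges loops opm
      by (simp add: piw_def)
  next
    case False
    have "(\<Sum>a\<in>{a\<in>A. tm a = u}. (if og a = v then - w (edge_of rv a) else 0)) =
       - (\<Sum>a\<in>{a\<in>A. tm a = u}. (if og a = v then w (edge_of rv a) else 0))"
      by (simp add: sum_negf[symmetric] if_distrib cong: if_cong)
    thus ?thesis using False unfolding sum_D edges loops opm by simp
  qed
qed

end

context setting begin

abbreviation adj :: "('v, 'a) dedge set \<Rightarrow> 'v \<Rightarrow> 'v \<Rightarrow> bool" where
  "adj F \<equiv> (\<lambda>x y. \<exists>e\<in>F. dends og e = {x, y})"

definition crep :: "('v, 'a) dedge set \<Rightarrow> ('v, 'a) dedge set \<Rightarrow> 'v list \<Rightarrow> ('v, 'a) dedge list \<Rightarrow> bool" where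
  "crep F C vs es \<longleftrightarrow> C \<subseteq> F \<and> length vs \<ge> 1 \<and> length es = length vs \<and>
      distinct vs \<and> distinct es \<and> set es = C \<and>
      (\<forall>i<length vs. dends og (es ! i) = {vs ! i, vs ! ((i + 1) mod length vs)})"

lemma is_cycle_crep: "is_cycle og F C \<longleftrightarrow> (\<exists>vs es. crep F C vs es)"
  unfolding is_cycle_def crep_def by blast

definition VC :: "('v, 'a) dedge set \<Rightarrow> 'v set" where
  "VC C = \<Union>(dends og ` C)"

lemma crep_card: "crep F C vs es \<Longrightarrow> card C = length vs"
  unfolding crep_def using distinct_card by metis

lemma crep_VC: assumes "crep F C vs es" shows "VC C = set vs"
proof
  show "VC C \<subseteq> set vs"
  proof
    fix x assume "x \<in> VC C"
    then obtain e where e: "e \<in> C" "x \<in> dends og e" unfolding VC_def by blast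
    then obtain i where i: "i < length es" "es ! i = e" using assms unfolding crep_def by (metis in_set_conv_nth)
    hence "x \<in> {vs ! i, vs ! ((i + 1) mod length vs)}" using assms e unfolding crep_def by auto
    moreover have lp: "length vs > 0" using assms unfolding crep_def by auto
    moreover have "i < length vs" "(i + 1) mod length vs < length vs" using assms i lp unfolding crep_def by auto
    ultimately show "x \<in> set vs" by auto
  qed
  show "set vs \<subseteq> VC C"
  proof
    fix x assume "x \<in> set vs"
    then obtain i where i: "i < length vs" "vs ! i = x" by (metis in_set_conv_nth)
    hence "es ! i \<in> C" "x \<in> dends og (es ! i)" using assms unfolding crep_def by auto
    thus "x \<in> VC C" unfolding VC_def by blast
  qed
qed

lemma crep_mono: "crep F C vs es \<Longrightarrow> C \<subseteq> F' \<Longrightarrow> crep F' C vs es"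
  unfolding crep_def by blast

lemma is_cycle_mono: "is_cycle og F C \<Longrightarrow> C \<subseteq> F' \<Longrightarrow> is_cycle og F' C"
  using crep_mono is_cycle_crep by metis

lemma is_cycle_sub: "is_cycle og F C \<Longrightarrow> C \<subseteq> F"
  unfolding is_cycle_def by blast

lemma crep_conn:
  assumes "crep F C vs es" "i < length vs"
  shows "(adj C)\<^sup>*\<^sup>* (vs ! 0) (vs ! i)"
  using assms(2)
proof (induction i)
  case 0 thus ?case by simp
next
  case (Suc i)
  hence "i < length vs" by simp
  hence "dends og (es ! i) = {vs ! i, vs ! Suc i}" "es ! i \<in> C"
    using assms(1) Suc.prems unfolding crep_def by (auto simp: nth_mem)
  hence "adj C (vs ! i) (vs ! Suc i)" by blast
  moreover have "(adj C)\<^sup>*\<^sup>* (vs ! 0) (vs ! i)" using Suc by simp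
  ultimately show ?case by (simp add: rtranclp.rtrancl_into_rtrancl)
qed

lemma adj_sym: "adj F x y \<Longrightarrow> adj F y x"
  by (auto simp: insert_commute)

lemma rtranclp_adj_sym: "(adj F)\<^sup>*\<^sup>* x y \<Longrightarrow> (adj F)\<^sup>*\<^sup>* y x"
proof (induction rule: rtranclp_induct)
  case base thus ?case by simp
next
  case (step y z)
  hence "adj F z y" using adj_sym by blast
  thus ?case using step(3) by (rule converse_rtranclp_into_rtranclp)
qed

lemma rtranclp_adj_mono: "(adj F)\<^sup>*\<^sup>* x y \<Longrightarrow> F \<subseteq> F' \<Longrightarrow> (adj F')\<^sup>*\<^sup>* x y"
  by (erule rtranclp_mono[THEN predicate2D, rotated]) blast

lemma crep_conn2:
  assumes "crep F C vs es" "x \<in> set vs" "y \<in> set vs"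
  shows "(adj C)\<^sup>*\<^sup>* x y"
proof -
  obtain i j where "i < length vs" "vs ! i = x" "j < length vs" "vs ! j = y" using assms by (metis in_set_conv_nth)
  hence "(adj C)\<^sup>*\<^sup>* (vs ! 0) x" "(adj C)\<^sup>*\<^sup>* (vs ! 0) y" using crep_conn[OF assms(1)] by auto
  thus ?thesis using rtranclp_trans[OF rtranclp_adj_sym] by blast
qed

lemma crep_len1:
  assumes "crep F C vs es" "length vs = 1" "C \<subseteq> D"
  shows "C = {Lp (vs ! 0)}"
proof -
  have "es ! 0 \<in> C" "dends og (es ! 0) = {vs ! 0}" using assms unfolding crep_def by auto
  hence e: "es ! 0 = Lp (vs ! 0)" using dends_single assms(3) by blast
  have "es = [es ! 0]" using assms unfolding crep_def by (metis One_nat_def length_0_conv length_Suc_conv nth_Cons_0)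
  thus ?thesis using assms e unfolding crep_def by (metis list.set(1) list.set(2))
qed

lemma loop_cycle: "Lp v \<in> F \<Longrightarrow> is_cycle og F {Lp v}"
  unfolding is_cycle_crep crep_def by (rule exI[of _ "[v]"], rule exI[of _ "[Lp v]"]) auto

lemma adj_X: "F \<subseteq> D \<Longrightarrow> adj F x y \<Longrightarrow> x \<in> X \<and> y \<in> X"
  using dends_sub by blast

lemma comp_self: "u \<in> X \<Longrightarrow> u \<in> comp_vertices X og F u"
  unfolding comp_vertices_def by simp

lemma comp_eq:
  assumes "F \<subseteq> D" "v \<in> comp_vertices X og F u"
  shows "comp_vertices X og F v = comp_vertices X og F u"
proof -
  have uv: "(adj F)\<^sup>*\<^sup>* u v" using assms unfolding comp_vertices_def by blast
  show ?thesis unfolding comp_vertices_def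
  proof (rule Collect_cong)
    fix w show "(w \<in> X \<and> (adj F)\<^sup>*\<^sup>* v w) = (w \<in> X \<and> (adj F)\<^sup>*\<^sup>* u w)"
      using rtranclp_trans[OF uv, of w] rtranclp_trans[OF rtranclp_adj_sym[OF uv], of w] by blast
  qed
qed

lemma comp_mem_iff: "comp_vertices X og F u = {v\<in>X. (adj F)\<^sup>*\<^sup>* u v}"
  unfolding comp_vertices_def by simp

lemma rtranclp_X: "(adj F)\<^sup>*\<^sup>* x y \<Longrightarrow> F \<subseteq> D \<Longrightarrow> x \<in> X \<Longrightarrow> y \<in> X"
  by (induction rule: rtranclp_induct) (auto dest: adj_X)

lemma comp_cycle:
  assumes FD: "F \<subseteq> D" and cy: "is_cycle og F C" and v: "v \<in> VC C"
  shows "VC C \<subseteq> comp_vertices X og F v" "C \<subseteq> comp_edges og F (comp_vertices X og F v)"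
proof -
  obtain vs es where r: "crep F C vs es" using cy is_cycle_crep by blast
  have CF: "C \<subseteq> F" using r unfolding crep_def by blast
  have VX: "VC C \<subseteq> X" using CF FD dends_sub unfolding VC_def by blast
  have conn: "(adj F)\<^sup>*\<^sup>* v x" if x: "x \<in> VC C" for x
  proof -
    have "(adj C)\<^sup>*\<^sup>* v x" using crep_conn2[OF r] crep_VC[OF r] v x by simp
    thus ?thesis using rtranclp_adj_mono CF by blast
  qed
  show 1: "VC C \<subseteq> comp_vertices X og F v" using conn VX unfolding comp_vertices_def by blast
  show "C \<subseteq> comp_edges og F (comp_vertices X og F v)"
    unfolding comp_edges_def using CF 1 unfolding VC_def by blast
qed

lemma cycles_comp_edges:
  "is_cycle og (comp_edges og F W) C \<longleftrightarrow> is_cycle og F C \<and> C \<subseteq> comp_edges og F W"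
  using is_cycle_mono is_cycle_sub unfolding comp_edges_def by blast

lemma comp_in_components: "u \<in> X \<Longrightarrow> comp_vertices X og F u \<in> components X og F"
  unfolding components_def by blast

lemma HQ_sub: "F \<in> HQ X dX A og rv \<Longrightarrow> F \<subseteq> D"
  unfolding HQ_def by blast

lemma HQ_cycle:
  assumes H: "F \<in> HQ X dX A og rv" and cy: "is_cycle og F C" and v: "v \<in> VC C"
  shows "cycles og (comp_edges og F (comp_vertices X og F v)) = {C}"
    "comp_vertices X og F v \<inter> dX = {}"
proof -
  have FD: "F \<subseteq> D" using H HQ_sub by blast
  have vX: "v \<in> X" using v cy is_cycle_sub FD dends_sub unfolding VC_def by blast
  let ?W = "comp_vertices X og F v"
  have W: "?W \<in> components X og F" using comp_in_components vX by blast
  have Cin: "C \<in> cycles og (comp_edges og F ?W)"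
    unfolding cycles_def using cycles_comp_edges comp_cycle[OF FD cy v] cy by blast
  have "(card (?W \<inter> dX) = 1 \<and> cycles og (comp_edges og F ?W) = {}) \<or>
        (?W \<inter> dX = {} \<and> (\<exists>C. cycles og (comp_edges og F ?W) = {C} \<and> odd (card C)))"
    using H W unfolding HQ_def by blast
  thus "cycles og (comp_edges og F ?W) = {C}" "?W \<inter> dX = {}" using Cin by auto
qed

lemma HQ_odd:
  assumes H: "F \<in> HQ X dX A og rv" and cy: "is_cycle og F C"
  shows "odd (card C)"
proof -
  have FD: "F \<subseteq> D" using H HQ_sub by blast
  obtain vs es where r: "crep F C vs es" using cy is_cycle_crep by blast
  have "vs ! 0 \<in> set vs" using r unfolding crep_def by (auto intro!: nth_mem)
  hence v: "vs ! 0 \<in> VC C" using crep_VC[OF r] by simp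
  hence vX: "vs ! 0 \<in> X" using cy is_cycle_sub FD dends_sub unfolding VC_def by blast
  let ?W = "comp_vertices X og F (vs ! 0)"
  have W: "?W \<in> components X og F" using comp_in_components vX by blast
  have cyc: "cycles og (comp_edges og F ?W) = {C}" using HQ_cycle[OF H cy v] by blast
  have "(card (?W \<inter> dX) = 1 \<and> cycles og (comp_edges og F ?W) = {}) \<or>
        (?W \<inter> dX = {} \<and> (\<exists>C. cycles og (comp_edges og F ?W) = {C} \<and> odd (card C)))"
    using H W unfolding HQ_def by blast
  thus ?thesis using cyc by auto
qed

lemma HQ_disj:
  assumes H: "F \<in> HQ X dX A og rv" and cy: "is_cycle og F C" and cy': "is_cycle og F C'"
    and v: "v \<in> VC C" "v \<in> VC C'"
  shows "C = C'"
  using HQ_cycle(1)[OF H cy v(1)] HQ_cycle(1)[OF H cy' v(2)] by blast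

lemma HQ_VC_I:
  assumes H: "F \<in> HQ X dX A og rv" and cy: "is_cycle og F C"
  shows "VC C \<subseteq> I"
proof
  fix v assume v: "v \<in> VC C"
  have FD: "F \<subseteq> D" using H HQ_sub by blast
  have vX: "v \<in> X" using v cy is_cycle_sub FD dends_sub unfolding VC_def by blast
  have "v \<in> comp_vertices X og F v" using comp_self vX by blast
  thus "v \<in> I" using HQ_cycle(2)[OF H cy v] vX by blast
qed

end

context setting begin

definition adm :: "('v, 'a) dedge set \<Rightarrow> ('v \<Rightarrow> ('v, 'a) dedge) \<Rightarrow> bool" where
  "adm F f \<longleftrightarrow> f \<in> I \<rightarrow>\<^sub>E F \<and> inj_on f I \<and> f ` I = F \<and> (\<forall>u\<in>I. u \<in> dends og (f u))"

definition oth :: "('v, 'a) dedge \<Rightarrow> 'v \<Rightarrow> 'v" where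
  "oth e u = (SOME y. dends og e = {u, y})"

lemma oth: assumes "e \<in> D" "u \<in> dends og e" shows "dends og e = {u, oth e u}"
proof -
  obtain y where "dends og e = {u, y}" using dends_two[OF assms] by blast
  thus ?thesis unfolding oth_def by (rule someI)
qed

definition Hf :: "('v \<Rightarrow> ('v, 'a) dedge) \<Rightarrow> 'v \<Rightarrow> 'v" where
  "Hf f v = (if v \<in> I then oth (f v) v else v)"

definition Cyc :: "('v, 'a) dedge set \<Rightarrow> ('v, 'a) dedge set set" where
  "Cyc F = {C. is_cycle og F C \<and> 2 \<le> card C}"

end

lemma doubleton_eq_left: "{a, b} = {a, c} \<Longrightarrow> b = c"
  by (auto simp: doubleton_eq_iff)

locale admctx = setting X dX A og tm rv
  for X dX :: "'v set" and A :: "'a set" and og tm :: "'a \<Rightarrow> 'v" and rv :: "'a \<Rightarrow> 'a" +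
  fixes F :: "('v, 'a) dedge set" and f :: "'v \<Rightarrow> ('v, 'a) dedge"
  assumes FD: "F \<subseteq> D" and ad: "adm F f"
begin

abbreviation "H \<equiv> Hf f"

lemma f_in: "u \<in> I \<Longrightarrow> f u \<in> F" using ad unfolding adm_def by blast
lemma f_inj: "inj_on f I" using ad unfolding adm_def by blast
lemma f_img: "f ` I = F" using ad unfolding adm_def by blast
lemma f_own: "u \<in> I \<Longrightarrow> u \<in> dends og (f u)" using ad unfolding adm_def by blast
lemma f_ext: "f \<in> I \<rightarrow>\<^sub>E F" using ad unfolding adm_def by blast

lemma dends_f: assumes u: "u \<in> I" shows "dends og (f u) = {u, H u}"
proof -
  have "dends og (f u) = {u, oth (f u) u}" by (rule oth) (use f_in f_own FD u in auto)
  thus ?thesis using u unfolding Hf_def by simp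
qed

lemma H_out: "v \<notin> I \<Longrightarrow> H v = v" unfolding Hf_def by auto

lemma H_X: "H v \<in> X" if "v \<in> X"
proof (cases "v \<in> I")
  case True
  have "H v \<in> dends og (f v)" using dends_f True by simp
  thus ?thesis using dends_sub f_in True FD by blast
next
  case False hence "H v = v" by (rule H_out)
  thus ?thesis using that by simp
qed

lemma Hpow_X: "v \<in> X \<Longrightarrow> (H ^^ n) v \<in> X"
  by (induction n) (auto simp: H_X)

lemma Hpow_out: "v \<notin> I \<Longrightarrow> (H ^^ n) v = v"
  by (induction n) (auto simp: H_out)

lemma adj_H: "u \<in> I \<Longrightarrow> adj F u (H u)"
  using dends_f f_in by blast

definition own :: "('v, 'a) dedge \<Rightarrow> 'v" where "own e = inv_into I f e"

lemma own: "e \<in> F \<Longrightarrow> own e \<in> I \<and> f (own e) = e"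
  unfolding own_def using f_img inv_into_into[of e f I] f_inv_into_f[of e f I] by auto

lemma own_f: "u \<in> I \<Longrightarrow> own (f u) = u"
  unfolding own_def using f_inj by simp

lemma own_dends: assumes "e \<in> F" shows "own e \<in> dends og e"
proof -
  have "own e \<in> I" "f (own e) = e" using own[OF assms] by auto
  thus ?thesis using f_own[of "own e"] by simp
qed

definition fwd :: "('v, 'a) dedge set \<Rightarrow> 'v list \<Rightarrow> ('v, 'a) dedge list \<Rightarrow> bool" where
  "fwd C vs es \<longleftrightarrow> crep F C vs es \<and> set vs \<subseteq> I \<and> (\<forall>i<length vs. f (vs ! i) = es ! i)"

definition rvs :: "'v list \<Rightarrow> 'v list" where
  "rvs vs = map (\<lambda>i. vs ! ((length vs - i) mod length vs)) [0..<length vs]"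

lemma rev_idx_inj:
  assumes "i < k" "j < k" "(k - i) mod k = (k - j) mod (k::nat)"
  shows "i = j"
proof (cases "i = 0")
  case True
  show ?thesis
  proof (rule ccontr)
    assume "i \<noteq> j" hence "j > 0" using True by simp
    hence "(k - j) mod k = k - j" using assms by simp
    thus False using assms True \<open>j > 0\<close> by simp
  qed
next
  case False
  hence i: "(k - i) mod k = k - i" using assms by simp
  show ?thesis
  proof (cases "j = 0")
    case True thus ?thesis using assms i False by simp
  next
    case False
    hence "(k - j) mod k = k - j" using assms by simp
    thus ?thesis using assms i by simp
  qed
qed

lemma crep_rev:
  assumes r: "crep F C vs es"
  shows "crep F C (rvs vs) (rev es)"
proof -
  let ?k = "length vs"
  have k: "?k \<ge> 1" "length es = ?k" using r unfolding crep_def by auto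
  have len: "length (rvs vs) = ?k" unfolding rvs_def by simp
  have nth: "\<And>i. i < ?k \<Longrightarrow> rvs vs ! i = vs ! ((?k - i) mod ?k)" unfolding rvs_def by simp
  have dist: "distinct (rvs vs)"
  proof -
    have "inj_on (\<lambda>i. vs ! ((?k - i) mod ?k)) {0..<?k}"
    proof (rule inj_onI)
      fix i j assume "i \<in> {0..<?k}" "j \<in> {0..<?k}" "vs ! ((?k - i) mod ?k) = vs ! ((?k - j) mod ?k)"
      moreover have "(?k - i) mod ?k < ?k" "(?k - j) mod ?k < ?k" using k by (auto intro: mod_less_divisor)
      ultimately have "(?k - i) mod ?k = (?k - j) mod ?k" using r unfolding crep_def
        by (simp add: nth_eq_iff_index_eq)
      thus "i = j" using rev_idx_inj \<open>i \<in> _\<close> \<open>j \<in> _\<close> by auto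
    qed
    thus ?thesis unfolding rvs_def by (simp add: distinct_map)
  qed
  have ends: "dends og (rev es ! i) = {rvs vs ! i, rvs vs ! ((i + 1) mod length (rvs vs))}" if i: "i < ?k" for i
  proof -
    have "rev es ! i = es ! (?k - 1 - i)" using i k by (simp add: rev_nth)
    moreover have "?k - 1 - i < ?k" using i by simp
    ultimately have e: "dends og (rev es ! i) = {vs ! (?k - 1 - i), vs ! ((?k - 1 - i + 1) mod ?k)}"
      using r unfolding crep_def by simp
    have a: "(?k - 1 - i + 1) mod ?k = (?k - i) mod ?k" using i by (simp add: Suc_diff_Suc)
    have b: "rvs vs ! ((i + 1) mod ?k) = vs ! (?k - 1 - i)"
    proof (cases "i + 1 < ?k")
      case True thus ?thesis using nth by simp
    next
      case False hence "i + 1 = ?k" using i by simp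
      have "vs \<noteq> []" using k by auto
      hence "rvs vs ! 0 = vs ! 0" using nth[of 0] by simp
      thus ?thesis using \<open>i + 1 = ?k\<close> by simp
    qed
    show ?thesis using e a b nth[OF i] len by (simp add: insert_commute)
  qed
  show ?thesis using r dist ends len k unfolding crep_def by auto
qed

lemma rvs_nth: "i < length vs \<Longrightarrow> rvs vs ! i = vs ! ((length vs - i) mod length vs)"
  unfolding rvs_def by simp

lemma fwd_exists:
  assumes r: "crep F C vs es"
  shows "\<exists>vs' es'. fwd C vs' es'"
proof -
  let ?k = "length vs"
  have k: "?k \<ge> 1" "length es = ?k" and CF: "C \<subseteq> F" and des: "distinct es" and sC: "set es = C"
    using r unfolding crep_def by auto
  have kpos[simp]: "length vs > 0" using k by (cases vs) auto
  have ends: "\<And>i. i < ?k \<Longrightarrow> dends og (es ! i) = {vs ! i, vs ! ((i + 1) mod ?k)}"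
    using r unfolding crep_def by auto
  define ow where "ow i = own (es ! i)" for i
  have esF: "es ! i \<in> F" if "i < ?k" for i
  proof -
    have "es ! i \<in> set es" by (rule nth_mem) (use that k in simp)
    thus ?thesis using CF sC by blast
  qed
  have o_in: "ow i = vs ! i \<or> ow i = vs ! ((i + 1) mod ?k)" if "i < ?k" for i
  proof -
    have "ow i \<in> dends og (es ! i)" unfolding ow_def using own_dends esF that by blast
    thus ?thesis using ends[OF that] by blast
  qed
  have fo: "\<And>i. i < ?k \<Longrightarrow> f (ow i) = es ! i" using own esF unfolding ow_def by blast
  have owI: "\<And>i. i < ?k \<Longrightarrow> ow i \<in> I" using own esF unfolding ow_def by blast
  show ?thesis
  proof (cases "\<forall>i<?k. ow i = vs ! i")
    case True
    moreover have "set vs \<subseteq> I"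
    proof
      fix x assume "x \<in> set vs"
      then obtain i where "i < ?k" "vs ! i = x" by (auto simp: in_set_conv_nth)
      thus "x \<in> I" using True owI by metis
    qed
    ultimately have "fwd C vs es" unfolding fwd_def using r fo by auto
    thus ?thesis by blast
  next
    case False
    then obtain i0 where i0: "i0 < ?k" "ow i0 \<noteq> vs ! i0" by blast
    hence o0: "ow i0 = vs ! ((i0 + 1) mod ?k)" using o_in by blast
    have k2: "?k \<ge> 2"
    proof (rule ccontr)
      assume "\<not> ?k \<ge> 2" hence "?k = 1" using k by simp
      thus False using o0 i0 by simp
    qed
    have step: "ow ((i + 1) mod ?k) = vs ! ((i + 2) mod ?k)" if "i < ?k" "ow i = vs ! ((i + 1) mod ?k)" for i
    proof -
      let ?j = "(i + 1) mod ?k"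
      have j: "?j < ?k" using k by (auto intro: mod_less_divisor)
      have "ow ?j \<noteq> vs ! ?j"
      proof
        assume "ow ?j = vs ! ?j"
        hence fj: "f (ow ?j) = f (ow i)" using that by simp
        have "es ! ?j = f (ow ?j)" using fo[OF j] by simp
        also have "\<dots> = f (ow i)" by (rule fj)
        also have "\<dots> = es ! i" using fo[OF that(1)] by simp
        finally have "es ! ?j = es ! i" .
        hence "?j = i" using des j that k by (simp add: nth_eq_iff_index_eq)
        moreover have "?j \<noteq> i"
        proof (cases "i + 1 < ?k")
          case True thus ?thesis by simp
        next
          case False hence "i + 1 = ?k" using that by simp
          thus ?thesis using k2 by auto
        qed
        ultimately show False by blast
      qed
      hence "ow ?j = vs ! ((?j + 1) mod ?k)" using o_in j by blast
      thus ?thesis by (simp add: mod_Suc_eq)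
    qed
    have all: "ow ((i0 + d) mod ?k) = vs ! ((i0 + d + 1) mod ?k)" for d
    proof (induction d)
      case 0 thus ?case using o0 i0 by simp
    next
      case (Suc d)
      define m where "m = (i0 + d) mod ?k"
      have m: "m < ?k" unfolding m_def by (rule mod_less_divisor[OF kpos])
      have e1: "(m + 1) mod ?k = (i0 + d + 1) mod ?k" unfolding m_def by (rule mod_add_left_eq)
      have e2: "(m + 2) mod ?k = (i0 + Suc d + 1) mod ?k" unfolding m_def
        using mod_add_left_eq[of "i0 + d" ?k 2] by simp
      have "ow m = vs ! ((m + 1) mod ?k)" using Suc.IH e1 unfolding m_def by simp
      hence "ow ((m + 1) mod ?k) = vs ! ((m + 2) mod ?k)" using step m by blast
      thus ?case using e1 e2 by simp
    qed
    have bk: "ow i = vs ! ((i + 1) mod ?k)" if i: "i < ?k" for i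
    proof -
      define d where "d = i + ?k - i0"
      have e: "(i0 + d) mod ?k = i" using i i0 unfolding d_def by simp
      have "Suc (i0 + d) mod ?k = Suc ((i0 + d) mod ?k) mod ?k" by (simp add: mod_Suc_eq)
      hence "(i0 + d + 1) mod ?k = (i + 1) mod ?k" using e by simp
      thus ?thesis using all[of d] e by simp
    qed
    have rr: "crep F C (rvs vs) (rev es)" by (rule crep_rev[OF r])
    have "f (rvs vs ! i) = rev es ! i \<and> rvs vs ! i \<in> I" if i: "i < length (rvs vs)" for i
    proof -
      have i': "i < ?k" using i unfolding rvs_def by simp
      have "rev es ! i = es ! (?k - 1 - i)" using i' k by (simp add: rev_nth)
      moreover have "?k - 1 - i < ?k" using i' by simp
      moreover have "(?k - 1 - i + 1) mod ?k = (?k - i) mod ?k" using i' by (simp add: Suc_diff_Suc)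
      moreover have "(?k - 1 - i + 1) mod ?k = (?k - i) mod ?k" using i' by (simp add: Suc_diff_Suc)
      ultimately have "ow (?k - 1 - i) = rvs vs ! i" using bk[of "?k - 1 - i"] rvs_nth[OF i'] by simp
      hence "f (rvs vs ! i) = es ! (?k - 1 - i) \<and> rvs vs ! i \<in> I"
        using fo[of "?k - 1 - i"] owI[of "?k - 1 - i"] \<open>?k - 1 - i < ?k\<close> by auto
      thus ?thesis using \<open>rev es ! i = es ! (?k - 1 - i)\<close> by simp
    qed
    hence "fwd C (rvs vs) (rev es)" unfolding fwd_def using rr by (auto simp: in_set_conv_nth)
    thus ?thesis by blast
  qed
qed

end

lemma sign_cycle_of_list:
  assumes "distinct cs"
  shows "sign (cycle_of_list cs) = (-1) ^ (length cs - 1)"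
  using assms
proof (induction cs rule: cycle_of_list.induct)
  case (1 i j cs)
  have ij: "i \<noteq> j" using "1.prems" by simp
  have "sign (cycle_of_list (i # j # cs)) = sign (Transposition.transpose i j) * sign (cycle_of_list (j # cs))"
    by (simp add: sign_compose permutation_swap_id permutation_of_cycle)
  also have "\<dots> = - ((-1) ^ (length (j # cs) - 1))" using 1 ij by (simp add: sign_swap_id)
  also have "\<dots> = (-1) ^ (length (i # j # cs) - 1)" by simp
  finally show ?case .
qed simp_all

lemma funpow_apply_add: "(f ^^ m) ((f ^^ n) x) = (f ^^ (m + n)) x"
  by (simp add: funpow_add)

lemma len_pos: "i < length xs \<Longrightarrow> 0 < length xs" by linarith

context admctx begin

lemma fwd_props:
  assumes fw: "fwd C vs es"
  shows "length vs \<ge> 1" "set vs \<subseteq> I" "distinct vs" "VC C = set vs" "card C = length vs"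
    "C = f ` set vs" "C \<subseteq> F"
    "\<And>i. i < length vs \<Longrightarrow> H (vs ! i) = vs ! ((i + 1) mod length vs)"
proof -
  have r: "crep F C vs es" and sI: "set vs \<subseteq> I" and fe: "\<And>i. i < length vs \<Longrightarrow> f (vs ! i) = es ! i"
    using fw unfolding fwd_def by auto
  show "length vs \<ge> 1" "set vs \<subseteq> I" "distinct vs" "C \<subseteq> F" using r sI unfolding crep_def by auto
  show "VC C = set vs" by (rule crep_VC[OF r])
  show "card C = length vs" by (rule crep_card[OF r])
  have les: "length es = length vs" and sC: "set es = C" using r unfolding crep_def by auto
  show "C = f ` set vs"
  proof -
    have "es = map f vs" using les fe by (simp add: list_eq_iff_nth_eq)
    thus ?thesis using sC by simp
  qed
  fix i assume i: "i < length vs"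
  have viI: "vs ! i \<in> I" using sI i by (simp add: subset_iff)
  have "dends og (es ! i) = {vs ! i, vs ! ((i + 1) mod length vs)}" using r i unfolding crep_def by auto
  moreover have "dends og (es ! i) = {vs ! i, H (vs ! i)}" using dends_f[OF viI] fe[OF i] by simp
  ultimately show "H (vs ! i) = vs ! ((i + 1) mod length vs)" using doubleton_eq_left by metis
qed

lemma fwd_pow:
  assumes fw: "fwd C vs es" and i: "i < length vs"
  shows "(H ^^ j) (vs ! i) = vs ! ((i + j) mod length vs)"
proof (induction j)
  case 0 thus ?case using i by simp
next
  case (Suc j)
  have k: "length vs > 0" using i by (rule len_pos)
  have m: "(i + j) mod length vs < length vs" using k by (rule mod_less_divisor)
  have "(H ^^ Suc j) (vs ! i) = H (vs ! ((i + j) mod length vs))" using Suc by simp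
  also have "\<dots> = vs ! (((i + j) mod length vs + 1) mod length vs)" using fwd_props(8)[OF fw m] .
  also have "((i + j) mod length vs + 1) mod length vs = (i + Suc j) mod length vs"
    by (simp add: mod_Suc_eq)
  finally show ?case .
qed

lemma fwd_orbit:
  assumes fw: "fwd C vs es" and x: "x \<in> set vs"
  shows "range (\<lambda>j. (H ^^ j) x) = set vs"
proof -
  obtain i where i: "i < length vs" "vs ! i = x" using x by (auto simp: in_set_conv_nth)
  have k: "length vs > 0" using i(1) by (rule len_pos)
  show ?thesis
  proof
    show "range (\<lambda>j. (H ^^ j) x) \<subseteq> set vs"
      using fwd_pow[OF fw i(1)] i k by (auto intro!: nth_mem)
    show "set vs \<subseteq> range (\<lambda>j. (H ^^ j) x)"
    proof
      fix y assume "y \<in> set vs"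
      then obtain t where t: "t < length vs" "vs ! t = y" by (auto simp: in_set_conv_nth)
      have "(i + (t + length vs - i)) mod length vs = t" using t i by simp
      hence "(H ^^ (t + length vs - i)) x = y" using fwd_pow[OF fw i(1), of "t + length vs - i"] i t by simp
      thus "y \<in> range (\<lambda>j. (H ^^ j) x)" by (metis rangeI)
    qed
  qed
qed

lemma cycle_fwd:
  assumes "is_cycle og F C"
  obtains vs es where "fwd C vs es"
  using fwd_exists assms is_cycle_crep by blast

lemma cycles_disj:
  assumes c1: "is_cycle og F C" and c2: "is_cycle og F C'" and x: "x \<in> VC C" "x \<in> VC C'"
  shows "C = C'"
proof -
  obtain vs es where f1: "fwd C vs es" using cycle_fwd c1 by blast
  obtain vs' es' where f2: "fwd C' vs' es'" using cycle_fwd c2 by blast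
  have x1: "x \<in> set vs" using x fwd_props(4)[OF f1] by simp
  have x2: "x \<in> set vs'" using x fwd_props(4)[OF f2] by simp
  have "set vs = set vs'"
    using fwd_orbit[OF f1 x1] fwd_orbit[OF f2 x2] by simp
  thus ?thesis using fwd_props(6)[OF f1] fwd_props(6)[OF f2] by simp
qed

lemma VC_I: "is_cycle og F C \<Longrightarrow> VC C \<subseteq> I"
  using cycle_fwd fwd_props(2,4) by metis

lemma VC_H: assumes "is_cycle og F C" "x \<in> VC C" shows "H x \<in> VC C"
proof -
  obtain vs es where fw: "fwd C vs es" using cycle_fwd assms(1) by blast
  have "(H ^^ 1) x \<in> range (\<lambda>j. (H ^^ j) x)" by blast
  thus ?thesis using fwd_orbit[OF fw] assms(2) fwd_props(4)[OF fw] by simp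
qed

lemma Cyc_H_ne: assumes "C \<in> Cyc F" "x \<in> VC C" shows "H x \<noteq> x"
proof -
  have cy: "is_cycle og F C" and c2: "2 \<le> card C" using assms unfolding Cyc_def by auto
  obtain vs es where fw: "fwd C vs es" using cycle_fwd cy by blast
  have k: "length vs \<ge> 2" using c2 fwd_props(5)[OF fw] by simp
  obtain i where i: "i < length vs" "vs ! i = x" using assms(2) fwd_props(4)[OF fw] by (auto simp: in_set_conv_nth)
  have "H x = vs ! ((i + 1) mod length vs)" using fwd_props(8)[OF fw i(1)] i by simp
  moreover have "(i + 1) mod length vs \<noteq> i"
  proof (cases "i + 1 < length vs")
    case True thus ?thesis by simp
  next
    case False hence "i + 1 = length vs" using i by simp
    thus ?thesis using k by auto
  qed
  moreover have "(i + 1) mod length vs < length vs" using len_pos[OF i(1)] by (rule mod_less_divisor)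
  ultimately show ?thesis using nth_eq_iff_index_eq[OF fwd_props(3)[OF fw], of "(i + 1) mod length vs" i] i by auto
qed

definition rho :: "('v, 'a) dedge set \<Rightarrow> 'v \<Rightarrow> 'v" where
  "rho C u = (if u \<in> VC C then H u else u)"

lemma rho_cycle:
  assumes fw: "fwd C vs es"
  shows "rho C = cycle_of_list vs"
proof
  fix u
  show "rho C u = cycle_of_list vs u"
  proof (cases "u \<in> set vs")
    case True
    then obtain i where i: "i < length vs" "vs ! i = u" by (auto simp: in_set_conv_nth)
    have d: "distinct vs" using fwd_props(3)[OF fw] .
    have "map (cycle_of_list vs) vs = rotate1 vs" using cyclic_rotation[OF d, of 1] by simp
    hence "cycle_of_list vs (vs ! i) = rotate1 vs ! i" using i by (metis nth_map)
    also have "\<dots> = vs ! (Suc i mod length vs)" using nth_rotate1[OF i(1)] .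
    finally have "cycle_of_list vs u = vs ! ((i + 1) mod length vs)" using i by simp
    moreover have "rho C u = H u" unfolding rho_def using True fwd_props(4)[OF fw] by simp
    ultimately show ?thesis using fwd_props(8)[OF fw i(1)] i by simp
  next
    case False
    hence "cycle_of_list vs u = u" by (rule id_outside_supp)
    thus ?thesis unfolding rho_def using fwd_props(4)[OF fw] False by simp
  qed
qed

lemma rho_sign:
  assumes "is_cycle og F C"
  shows "sign (rho C) = (-1) ^ (card C - 1)" "rho C permutes VC C"
proof -
  obtain vs es where fw: "fwd C vs es" using cycle_fwd assms by blast
  show "sign (rho C) = (-1) ^ (card C - 1)"
    using rho_cycle[OF fw] sign_cycle_of_list[OF fwd_props(3)[OF fw]] fwd_props(5)[OF fw] by simp
  show "rho C permutes VC C"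
    using rho_cycle[OF fw] cycle_permutes fwd_props(4)[OF fw] by simp
qed

lemma orbit_in_I:
  assumes y: "y \<in> I" and k: "(H ^^ k) y = y" "0 < k" and j: "j < k"
  shows "(H ^^ j) y \<in> I"
proof (rule ccontr)
  assume "(H ^^ j) y \<notin> I"
  hence "(H ^^ (k - j)) ((H ^^ j) y) = (H ^^ j) y" by (rule Hpow_out)
  moreover have "(H ^^ (k - j)) ((H ^^ j) y) = (H ^^ k) y"
    using j by (simp add: funpow_apply_add)
  ultimately show False using k y \<open>(H ^^ j) y \<notin> I\<close> by simp
qed

lemma orbit_cycle:
  assumes y: "y \<in> I" and k: "(H ^^ k) y = y" "0 < k"
    and least: "\<And>j. 0 < j \<Longrightarrow> j < k \<Longrightarrow> (H ^^ j) y \<noteq> y"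
  defines "vs \<equiv> map (\<lambda>j. (H ^^ j) y) [0..<k]"
  shows "fwd (f ` set vs) vs (map f vs)"
proof -
  have len: "length vs = k" unfolding vs_def by simp
  have nth: "\<And>i. i < k \<Longrightarrow> vs ! i = (H ^^ i) y" unfolding vs_def by simp
  have sI: "set vs \<subseteq> I" unfolding vs_def using orbit_in_I[OF y k] by auto
  have dist: "distinct vs"
  proof -
    have "inj_on (\<lambda>j. (H ^^ j) y) {0..<k}"
    proof (rule inj_onI, rule ccontr)
      fix i j assume i: "i \<in> {0..<k}" and j: "j \<in> {0..<k}" and e: "(H ^^ i) y = (H ^^ j) y" and ne: "i \<noteq> j"
      have gen: False if ab: "a < b" "b < k" "(H ^^ a) y = (H ^^ b) y" for a b
      proof -
        have "(H ^^ (k - b + a)) y = (H ^^ (k - b)) ((H ^^ a) y)" by (simp add: funpow_add)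
        also have "\<dots> = (H ^^ (k - b)) ((H ^^ b) y)" using ab by simp
        also have "\<dots> = (H ^^ k) y" using ab by (simp add: funpow_apply_add)
        finally have "(H ^^ (k - b + a)) y = y" using k by simp
        moreover have "(H ^^ (k - b + a)) y \<noteq> y" by (rule least) (use ab in auto)
        ultimately show False by contradiction
      qed
      show False
      proof (cases "i < j")
        case True thus False using gen[of i j] j e by simp
      next
        case False hence "j < i" using ne by simp
        thus False using gen[of j i] i e by simp
      qed
    qed
    thus ?thesis unfolding vs_def by (simp add: distinct_map)
  qed
  have cr: "crep F (f ` set vs) vs (map f vs)"
    unfolding crep_def
  proof (intro conjI allI impI)
    show "f ` set vs \<subseteq> F" using sI f_in by blast
    show "length vs \<ge> 1" using len k by simp
    show "length (map f vs) = length vs" by simp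
    show "distinct vs" by (rule dist)
    show "distinct (map f vs)" using dist f_inj sI by (simp add: distinct_map inj_on_subset)
    show "set (map f vs) = f ` set vs" by simp
    fix i assume i: "i < length vs"
    have viI: "vs ! i \<in> I" using sI i by (simp add: subset_iff)
    have "H (vs ! i) = (H ^^ (i + 1)) y" using nth i len by simp
    also have "\<dots> = vs ! ((i + 1) mod length vs)"
    proof (cases "i + 1 < k")
      case True thus ?thesis using nth len by simp
    next
      case False hence "i + 1 = k" using i len by simp
      thus ?thesis using k nth len by simp
    qed
    finally show "dends og (map f vs ! i) = {vs ! i, vs ! ((i + 1) mod length vs)}"
      using dends_f[OF viI] i by simp
  qed
  show ?thesis unfolding fwd_def using cr sI by simp
qed

end

lemma sum_pow_prod:
  fixes g :: "'x \<Rightarrow> 'c :: comm_semiring_1"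
  assumes "finite S"
  shows "(\<Sum>T\<in>Pow S. \<Prod>x\<in>T. g x) = (\<Prod>x\<in>S. g x + 1)"
  using prod_add[OF assms, of g "\<lambda>_. 1"] by simp

context admctx begin

lemma finF: "finite F" using FD finD finite_subset by blast

lemma finCyc: "finite (Cyc F)"
proof -
  have "Cyc F \<subseteq> Pow F" unfolding Cyc_def using is_cycle_sub by blast
  moreover have "finite (Pow F)" using finF by simp
  ultimately show ?thesis by (rule finite_subset)
qed

lemma Cyc_cycle: "C \<in> Cyc F \<Longrightarrow> is_cycle og F C" unfolding Cyc_def by blast

lemma card_VC: assumes "is_cycle og F C" shows "card (VC C) = card C" "finite (VC C)"
proof -
  obtain vs es where fw: "fwd C vs es" using cycle_fwd assms by blast
  show "card (VC C) = card C" using fwd_props(3,4,5)[OF fw] distinct_card[of vs] by simp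
  show "finite (VC C)" using fwd_props(4)[OF fw] by simp
qed

lemma VC_ne: assumes "is_cycle og F C" shows "VC C \<noteq> {}"
proof -
  obtain vs es where fw: "fwd C vs es" using cycle_fwd assms by blast
  thus ?thesis using fwd_props(1,4)[OF fw] by auto
qed

definition compat :: "('v \<Rightarrow> 'v) \<Rightarrow> bool" where
  "compat p \<longleftrightarrow> p permutes I \<and> (\<forall>u\<in>I. p u \<in> dends og (f u))"

definition pT :: "('v, 'a) dedge set set \<Rightarrow> 'v \<Rightarrow> 'v" where
  "pT T u = (if u \<in> \<Union>(VC ` T) then H u else u)"

lemma pT_insert:
  assumes T: "T \<subseteq> Cyc F" and C: "C \<in> Cyc F" "C \<notin> T"
  shows "pT (insert C T) = rho C \<circ> pT T"
proof
  fix u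
  have disj: "VC C \<inter> VC C' = {}" if "C' \<in> T" for C'
    using cycles_disj[OF Cyc_cycle[OF C(1)] Cyc_cycle] that T C(2) by blast
  show "pT (insert C T) u = (rho C \<circ> pT T) u"
  proof (cases "u \<in> VC C")
    case True
    hence "u \<notin> \<Union>(VC ` T)" using disj by blast
    thus ?thesis using True unfolding pT_def rho_def by simp
  next
    case False
    show ?thesis
    proof (cases "u \<in> \<Union>(VC ` T)")
      case True
      then obtain C' where C': "C' \<in> T" "u \<in> VC C'" by blast
      have "H u \<in> VC C'" using VC_H[OF Cyc_cycle C'(2)] C' T by blast
      hence "H u \<notin> VC C" using disj[OF C'(1)] by blast
      thus ?thesis using True False unfolding pT_def rho_def by simp
    next
      case False2: False
      thus ?thesis using False unfolding pT_def rho_def by simp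
    qed
  qed
qed

lemma pT_perm_sign:
  assumes T: "T \<subseteq> Cyc F"
  shows "pT T permutes \<Union>(VC ` T) \<and> sign (pT T) = (\<Prod>C\<in>T. (-1) ^ (card C - 1))"
proof -
  have "finite T" using T finCyc finite_subset by blast
  thus ?thesis using T
  proof (induction T rule: finite_subset_induct')
    case empty
    have e: "pT {} = id" by (rule ext) (simp add: pT_def)
    have "id permutes \<Union>(VC ` {})" by (rule permutes_id)
    moreover have "sign (id::'v\<Rightarrow>'v) = (\<Prod>C\<in>{}. (-1) ^ (card C - 1))" by simp
    ultimately show ?case unfolding e by blast
  next
    case (insert C T)
    have eq: "pT (insert C T) = rho C \<circ> pT T" by (rule pT_insert) (use insert in auto)
    have cy: "is_cycle og F C" using insert Cyc_cycle by blast
    have r: "rho C permutes VC C" "sign (rho C) = (-1) ^ (card C - 1)" using rho_sign[OF cy] by auto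
    have p1: "rho C permutes \<Union>(VC ` insert C T)" using r(1) by (rule permutes_subset) auto
    have p2: "pT T permutes \<Union>(VC ` insert C T)" using insert.IH by (auto intro: permutes_subset)
    have finU: "finite (\<Union>(VC ` insert C T))" using insert card_VC Cyc_cycle by auto
    have perm: "permutation (rho C)" "permutation (pT T)"
      using p1 p2 finU permutes_imp_permutation by blast+
    have "sign (pT (insert C T)) = sign (rho C) * sign (pT T)"
      unfolding eq by (rule sign_compose[OF perm])
    also have "\<dots> = (\<Prod>C\<in>insert C T. (-1) ^ (card C - 1))"
      using insert r(2) by simp
    finally have sg: "sign (pT (insert C T)) = (\<Prod>C\<in>insert C T. (-1) ^ (card C - 1))" .
    have pm: "pT (insert C T) permutes \<Union>(VC ` insert C T)" unfolding eq by (rule permutes_compose[OF p2 p1])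
    show ?case by (rule conjI[OF pm sg])
  qed
qed

lemma pT_moved:
  assumes T: "T \<subseteq> Cyc F"
  shows "{u\<in>I. pT T u \<noteq> u} = \<Union>(VC ` T)"
proof
  show "{u\<in>I. pT T u \<noteq> u} \<subseteq> \<Union>(VC ` T)" unfolding pT_def by auto
  show "\<Union>(VC ` T) \<subseteq> {u\<in>I. pT T u \<noteq> u}"
  proof
    fix u assume u: "u \<in> \<Union>(VC ` T)"
    then obtain C where C: "C \<in> T" "u \<in> VC C" by blast
    have "u \<in> I" using VC_I[OF Cyc_cycle] C T by blast
    moreover have "H u \<noteq> u" using Cyc_H_ne C T by blast
    ultimately show "u \<in> {u\<in>I. pT T u \<noteq> u}" using u unfolding pT_def by simp
  qed
qed

lemma pT_card:
  assumes T: "T \<subseteq> Cyc F"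
  shows "card {u\<in>I. pT T u \<noteq> u} = (\<Sum>C\<in>T. card C)"
proof -
  have fT: "finite T" using T finCyc finite_subset by blast
  have "card (\<Union>(VC ` T)) = (\<Sum>C\<in>T. card (VC C))"
  proof (rule card_UN_disjoint[OF fT])
    show "\<forall>C\<in>T. finite (VC C)" using T card_VC Cyc_cycle by blast
    show "\<forall>C\<in>T. \<forall>C'\<in>T. C \<noteq> C' \<longrightarrow> VC C \<inter> VC C' = {}"
      using T cycles_disj Cyc_cycle by blast
  qed
  also have "\<dots> = (\<Sum>C\<in>T. card C)" using T card_VC Cyc_cycle by (intro sum.cong) auto
  finally show ?thesis using pT_moved[OF T] by simp
qed

lemma compat_iff: "u \<in> I \<Longrightarrow> p u \<in> dends og (f u) \<longleftrightarrow> p u = u \<or> p u = H u"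
  using dends_f by simp

lemma pT_compat:
  assumes T: "T \<subseteq> Cyc F"
  shows "compat (pT T)"
  unfolding compat_def
proof
  have "\<Union>(VC ` T) \<subseteq> I" using T VC_I Cyc_cycle by blast
  thus "pT T permutes I" using pT_perm_sign[OF T] permutes_subset by blast
  show "\<forall>u\<in>I. pT T u \<in> dends og (f u)" using compat_iff unfolding pT_def by auto
qed

lemma pT_inj: "inj_on pT (Pow (Cyc F))"
proof -
  have sub: "T1 \<subseteq> T2" if T1: "T1 \<subseteq> Cyc F" and T2: "T2 \<subseteq> Cyc F" and e: "pT T1 = pT T2" for T1 T2
  proof
    fix C assume C: "C \<in> T1"
    have cy: "is_cycle og F C" using C T1 Cyc_cycle by blast
    obtain x where x: "x \<in> VC C" using VC_ne[OF cy] by blast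
    have xI: "x \<in> I" using VC_I[OF cy] x by blast
    have "x \<in> {u\<in>I. pT T1 u \<noteq> u}" using pT_moved[OF T1] x C by blast
    hence "x \<in> {u\<in>I. pT T2 u \<noteq> u}" using e by simp
    then obtain C' where C': "C' \<in> T2" "x \<in> VC C'" using pT_moved[OF T2] by blast
    have "C = C'" using cycles_disj[OF cy Cyc_cycle x C'(2)] C' T2 by blast
    thus "C \<in> T2" using C' by simp
  qed
  show ?thesis
  proof (rule inj_onI)
    fix T1 T2 assume "T1 \<in> Pow (Cyc F)" "T2 \<in> Pow (Cyc F)" "pT T1 = pT T2"
    thus "T1 = T2" using sub[of T1 T2] sub[of T2 T1] by auto
  qed
qed

lemma pT_surj:
  assumes cp: "compat p"
  shows "\<exists>T\<subseteq>Cyc F. p = pT T"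
proof -
  have pp: "p permutes I" using cp unfolding compat_def by blast
  have perm: "permutation p" using pp finI permutes_imp_permutation by blast
  define M where "M = {u. p u \<noteq> u}"
  have MI: "M \<subseteq> I" unfolding M_def using permutes_not_in[OF pp] by blast
  have pH: "p u = H u" if "u \<in> M" for u
  proof -
    have "u \<in> I" using that MI by blast
    hence "p u = u \<or> p u = H u" using cp compat_iff unfolding compat_def by blast
    thus ?thesis using that unfolding M_def by blast
  qed
  have Mclosed: "p u \<in> M" if "u \<in> M" for u
  proof -
    have "p (p u) \<noteq> p u"
    proof
      assume "p (p u) = p u"
      hence "p u = u" using permutes_inj[OF pp] by (simp add: inj_eq)
      thus False using that unfolding M_def by simp
    qed
    thus ?thesis unfolding M_def by simp
  qed
  have pows: "(p ^^ j) u \<in> M \<and> (p ^^ j) u = (H ^^ j) u" if "u \<in> M" for u j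
  proof (induction j)
    case 0 thus ?case using that by simp
  next
    case (Suc j)
    have a: "(p ^^ j) u \<in> M" and b: "(p ^^ j) u = (H ^^ j) u" using Suc by auto
    have "(p ^^ Suc j) u = p ((p ^^ j) u)" by simp
    also have "\<dots> = H ((p ^^ j) u)" using pH[OF a] .
    also have "\<dots> = (H ^^ Suc j) u" using b by simp
    finally show ?case using Mclosed[OF a] by simp
  qed
  have cyc_u: "\<exists>C\<in>Cyc F. u \<in> VC C \<and> VC C \<subseteq> M" if u: "u \<in> M" for u
  proof -
    define k where "k = least_power p u"
    have k: "(p ^^ k) u = u" "0 < k" using least_power_of_permutation[OF perm] unfolding k_def by auto
    have k2: "k > 1" using least_power_gt_one[OF perm] u unfolding k_def M_def by simp
    have Hk: "(H ^^ k) u = u" using k pows[OF u, of k] by simp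
    have least: "(H ^^ j) u \<noteq> u" if "0 < j" "j < k" for j
    proof
      assume "(H ^^ j) u = u"
      hence "(p ^^ j) u = u" using pows[OF u, of j] by simp
      hence "least_power p u \<le> j" by (rule least_power_le) (use that in simp)
      hence "k \<le> j" unfolding k_def .
      thus False using that by simp
    qed
    have uI: "u \<in> I" using u MI by blast
    define vs where "vs = map (\<lambda>j. (H ^^ j) u) [0..<k]"
    have fw: "fwd (f ` set vs) vs (map f vs)" unfolding vs_def by (rule orbit_cycle[OF uI Hk k(2) least])
    have cr: "is_cycle og F (f ` set vs)" using fw unfolding fwd_def is_cycle_crep by blast
    have "card (f ` set vs) = k" using fwd_props(5)[OF fw] unfolding vs_def by simp
    hence "f ` set vs \<in> Cyc F" using cr k2 unfolding Cyc_def by simp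
    moreover have "VC (f ` set vs) = set vs" using fwd_props(4)[OF fw] .
    moreover have "u \<in> set vs"
    proof -
      have "(H ^^ 0) u \<in> set vs" unfolding vs_def using k(2) by (simp only: set_map set_upt) (rule imageI, simp)
      thus ?thesis by simp
    qed
    moreover have "set vs \<subseteq> M"
    proof
      fix x assume "x \<in> set vs"
      then obtain j where xj: "x = (H ^^ j) u" unfolding vs_def by auto
      have a: "(p ^^ j) u \<in> M" and b: "(p ^^ j) u = (H ^^ j) u" using pows[OF u, of j] by auto
      show "x \<in> M" using a unfolding b xj .
    qed
    ultimately show ?thesis by auto
  qed
  define T where "T = {C\<in>Cyc F. VC C \<subseteq> M}"
  have "p = pT T"
  proof
    fix u
    show "p u = pT T u"
    proof (cases "u \<in> M")
      case True
      then obtain C where "C \<in> Cyc F" "u \<in> VC C" "VC C \<subseteq> M" using cyc_u by blast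
      hence "u \<in> \<Union>(VC ` T)" unfolding T_def by blast
      thus ?thesis using pH[OF True] unfolding pT_def by simp
    next
      case False
      hence "u \<notin> \<Union>(VC ` T)" unfolding T_def by blast
      thus ?thesis using False unfolding pT_def M_def by simp
    qed
  qed
  moreover have "T \<subseteq> Cyc F" unfolding T_def by blast
  ultimately show ?thesis by blast
qed

lemma pT_bij: "bij_betw pT (Pow (Cyc F)) {p. compat p}"
  unfolding bij_betw_def
proof
  show "inj_on pT (Pow (Cyc F))" by (rule pT_inj)
  show "pT ` Pow (Cyc F) = {p. compat p}"
    using pT_compat pT_surj by blast
qed

lemma card_compat: "card {p. compat p} = 2 ^ card (Cyc F)"
proof -
  have "card (Pow (Cyc F)) = card {p. compat p}" by (rule bij_betw_same_card[OF pT_bij])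
  thus ?thesis using card_Pow[OF finCyc] by simp
qed

definition Vb :: complex where
  "Vb = (if \<forall>C\<in>Cyc F. odd (card C) then 2 ^ card (Cyc F) else 0) - (if Cyc F = {} then 1 else 0)"

lemma compat_sum:
  "(\<Sum>p\<in>{p. compat p}. of_int (sign p) * (1 - (-1) ^ card {u\<in>I. p u \<noteq> u})) = Vb"
proof -
  let ?s = "\<lambda>C. (-1::complex) ^ (card C - 1)"
  have "(\<Sum>p\<in>{p. compat p}. of_int (sign p) * (1 - (-1) ^ card {u\<in>I. p u \<noteq> u})) =
      (\<Sum>T\<in>Pow (Cyc F). of_int (sign (pT T)) * (1 - (-1) ^ card {u\<in>I. pT T u \<noteq> u}))"
    using sum.reindex_bij_betw[OF pT_bij, symmetric] by simp
  also have "\<dots> = (\<Sum>T\<in>Pow (Cyc F). (\<Prod>C\<in>T. ?s C) - (\<Prod>C\<in>T. ?s C * (-1) ^ card C))"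
  proof (rule sum.cong[OF refl])
    fix T assume "T \<in> Pow (Cyc F)"
    hence T: "T \<subseteq> Cyc F" by simp
    have fT: "finite T" using T finCyc finite_subset by blast
    have sg: "of_int (sign (pT T)) = (\<Prod>C\<in>T. ?s C)" using pT_perm_sign[OF T] by simp
    have "(-1::complex) ^ card {u\<in>I. pT T u \<noteq> u} = (\<Prod>C\<in>T. (-1) ^ card C)"
      using pT_card[OF T] by (simp add: power_sum)
    thus "of_int (sign (pT T)) * (1 - (-1) ^ card {u\<in>I. pT T u \<noteq> u}) =
        (\<Prod>C\<in>T. ?s C) - (\<Prod>C\<in>T. ?s C * (-1) ^ card C)"
      using sg by (simp add: prod.distrib algebra_simps)
  qed
  also have "\<dots> = (\<Prod>C\<in>Cyc F. ?s C + 1) - (\<Prod>C\<in>Cyc F. ?s C * (-1) ^ card C + 1)"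
    by (simp add: sum_subtractf sum_pow_prod[OF finCyc])
  also have "(\<Prod>C\<in>Cyc F. ?s C * (-1) ^ card C + 1) = (if Cyc F = {} then 1 else 0)"
  proof -
    have zer: "\<And>C. C \<in> Cyc F \<Longrightarrow> ?s C * (-1) ^ card C + 1 = 0"
    proof -
      fix C assume "C \<in> Cyc F"
      hence c: "card C \<ge> 2" unfolding Cyc_def by simp
      have "?s C * (-1) ^ card C = (-1) ^ (card C - 1 + card C)" by (simp add: power_add)
      also have "card C - 1 + card C = Suc (2 * (card C - 1))" using c by simp
      finally show "?s C * (-1) ^ card C + 1 = 0" by (simp add: power_mult)
    qed
    show ?thesis
    proof (cases "Cyc F = {}")
      case True thus ?thesis by simp
    next
      case False
      then obtain C where C: "C \<in> Cyc F" by blast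
      have "(\<Prod>C\<in>Cyc F. ?s C * (-1) ^ card C + 1) = 0"
        by (subst prod_zero_iff[OF finCyc]) (use C zer in blast)
      thus ?thesis using False by simp
    qed
  qed
  also have "(\<Prod>C\<in>Cyc F. ?s C + 1) = (if \<forall>C\<in>Cyc F. odd (card C) then 2 ^ card (Cyc F) else 0)"
  proof (cases "\<forall>C\<in>Cyc F. odd (card C)")
    case True
    have "\<And>C. C \<in> Cyc F \<Longrightarrow> ?s C + 1 = 2"
    proof -
      fix C assume C: "C \<in> Cyc F"
      hence "odd (card C)" "card C \<ge> 2" using True unfolding Cyc_def by auto
      hence "even (card C - 1)" by simp
      thus "?s C + 1 = 2" by simp
    qed
    hence "(\<Prod>C\<in>Cyc F. ?s C + 1) = (\<Prod>C\<in>Cyc F. 2)" by (rule prod.cong[OF refl])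
    thus ?thesis using True by simp
  next
    case False
    then obtain C where C: "C \<in> Cyc F" "even (card C)" by blast
    hence "card C \<ge> 2" unfolding Cyc_def by simp
    hence "odd (card C - 1)" using C(2) by simp
    hence "?s C + 1 = 0" by simp
    hence "(\<Prod>C\<in>Cyc F. ?s C + 1) = 0" by (subst prod_zero_iff[OF finCyc]) (use C(1) in blast)
    thus ?thesis using False by simp
  qed
  finally show ?thesis unfolding Vb_def .
qed

end

context admctx begin

definition per :: "'v \<Rightarrow> bool" where "per y \<longleftrightarrow> (\<exists>j>0. (H ^^ j) y = y)"

definition tau :: "'v \<Rightarrow> 'v set" where "tau v = {y. \<exists>k. y = (H ^^ k) v \<and> per y}"

lemma tau_ne: assumes v: "v \<in> X" shows "tau v \<noteq> {}"
proof -
  let ?g = "\<lambda>j. (H ^^ j) v"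
  have img: "?g ` {0..card X} \<subseteq> X" using Hpow_X v by blast
  have "card (?g ` {0..card X}) \<le> card X" using img finX card_mono by blast
  hence "card (?g ` {0..card X}) < card {0..card X}" by simp
  hence "\<not> inj_on ?g {0..card X}" by (rule pigeonhole)
  then obtain i j where ij: "i \<in> {0..card X}" "j \<in> {0..card X}" "i \<noteq> j" "?g i = ?g j"
    unfolding inj_on_def by blast
  have gen: "tau v \<noteq> {}" if ab: "a < b" "?g a = ?g b" for a b
  proof -
    have "(H ^^ (b - a)) ((H ^^ a) v) = (H ^^ (b - a + a)) v" by (rule funpow_apply_add)
    also have "b - a + a = b" using ab(1) by simp
    finally have "(H ^^ (b - a)) ((H ^^ a) v) = (H ^^ a) v" using ab(2) by simp
    hence "per ((H ^^ a) v)" unfolding per_def using ab(1) by (intro exI[of _ "b - a"]) simp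
    thus ?thesis unfolding tau_def by blast
  qed
  show ?thesis
  proof (cases "i < j")
    case True thus ?thesis using gen ij by blast
  next
    case False hence "j < i" using ij by simp
    thus ?thesis using gen ij by metis
  qed
qed

lemma per_pow: assumes "per y" shows "per ((H ^^ k) y)"
proof -
  obtain j where j: "j > 0" "(H ^^ j) y = y" using assms unfolding per_def by blast
  have "(H ^^ j) ((H ^^ k) y) = (H ^^ (j + k)) y" by (rule funpow_apply_add)
  also have "\<dots> = (H ^^ (k + j)) y" by (simp add: add.commute)
  also have "\<dots> = (H ^^ k) ((H ^^ j) y)" by (rule funpow_apply_add[symmetric])
  finally show ?thesis unfolding per_def using j by auto
qed

lemma tau_H: "tau (H v) = tau v"
proof
  show "tau (H v) \<subseteq> tau v"
  proof
    fix y assume "y \<in> tau (H v)"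
    then obtain k where "y = (H ^^ k) (H v)" "per y" unfolding tau_def by blast
    hence "y = (H ^^ Suc k) v" "per y" by (simp_all add: funpow_swap1)
    thus "y \<in> tau v" unfolding tau_def by blast
  qed
  show "tau v \<subseteq> tau (H v)"
  proof
    fix y assume "y \<in> tau v"
    then obtain k where k: "y = (H ^^ k) v" "per y" unfolding tau_def by blast
    show "y \<in> tau (H v)"
    proof (cases k)
      case (Suc m)
      hence "y = (H ^^ m) (H v)" using k by (simp add: funpow_swap1)
      thus ?thesis using k unfolding tau_def by blast
    next
      case 0
      hence yv: "y = v" using k by simp
      then obtain j where j: "j > 0" "(H ^^ j) v = v" using k unfolding per_def by blast
      have "(H ^^ (j - 1)) ((H ^^ 1) v) = (H ^^ (j - 1 + 1)) v" by (rule funpow_apply_add)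
      hence "(H ^^ (j - 1)) (H v) = v" using j by simp
      hence "y = (H ^^ (j - 1)) (H v)" using yv by simp
      thus ?thesis using k(2) unfolding tau_def by blast
    qed
  qed
qed

lemma tau_pow: "tau ((H ^^ k) v) = tau v"
  by (induction k) (simp_all add: tau_H)

lemma tau_per: assumes "per y" shows "tau y = range (\<lambda>k. (H ^^ k) y)"
  unfolding tau_def using per_pow[OF assms] by blast

lemma adj_tau:
  assumes "adj F x y" shows "tau x = tau y"
proof -
  obtain e where e: "e \<in> F" "dends og e = {x, y}" using assms by blast
  let ?o = "own e"
  have o: "?o \<in> I" "f ?o = e" using own[OF e(1)] by auto
  hence "{?o, H ?o} = {x, y}" using dends_f[OF o(1)] e by simp
  hence "(x = ?o \<and> y = H ?o) \<or> (x = H ?o \<and> y = ?o)" by (auto simp: doubleton_eq_iff)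
  thus ?thesis using tau_H by metis
qed

lemma rtranclp_tau: "(adj F)\<^sup>*\<^sup>* x y \<Longrightarrow> tau x = tau y"
proof (induction rule: rtranclp_induct)
  case base thus ?case by simp
next
  case (step y z)
  have "tau y = tau z" by (rule adj_tau[OF step(2)])
  thus ?case using step(3) by simp
qed

lemma tau_comp: assumes "v \<in> comp_vertices X og F u" shows "tau v = tau u"
  using assms rtranclp_tau unfolding comp_vertices_def by auto

lemma tau_dX: "v \<notin> I \<Longrightarrow> tau v = {v}"
proof -
  assume v: "v \<notin> I"
  have "per v" unfolding per_def using H_out[OF v] by (intro exI[of _ 1]) simp
  thus ?thesis using tau_per Hpow_out[OF v] by auto
qed

lemma tau_cycle:
  assumes cy: "is_cycle og F C" and x: "x \<in> VC C"
  shows "tau x = VC C"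
proof -
  obtain vs es where fw: "fwd C vs es" using cycle_fwd cy by blast
  have xs: "x \<in> set vs" using x fwd_props(4)[OF fw] by simp
  then obtain i where i: "i < length vs" "vs ! i = x" by (auto simp: in_set_conv_nth)
  have "(H ^^ length vs) x = x" using fwd_pow[OF fw i(1), of "length vs"] i by simp
  hence "per x" unfolding per_def using i by (intro exI[of _ "length vs"]) auto
  thus ?thesis using tau_per fwd_orbit[OF fw xs] fwd_props(4)[OF fw] by simp
qed

lemma reach_H: "u \<in> X \<Longrightarrow> (adj F)\<^sup>*\<^sup>* u ((H ^^ k) u)"
proof (induction k)
  case 0 thus ?case by simp
next
  case (Suc k)
  show ?case
  proof (cases "(H ^^ k) u \<in> I")
    case True
    hence "adj F ((H ^^ k) u) ((H ^^ Suc k) u)" using adj_H by simp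
    thus ?thesis using Suc by (simp add: rtranclp.rtrancl_into_rtrancl)
  next
    case False thus ?thesis using Suc H_out by simp
  qed
qed

lemma comp_edges_VC: "C \<subseteq> comp_edges og F W \<Longrightarrow> VC C \<subseteq> W"
  unfolding comp_edges_def VC_def by blast

lemma adm_HQ:
  assumes odd: "\<forall>C\<in>Cyc F. odd (card C)"
  shows "F \<in> HQ X dX A og rv"
  unfolding HQ_def
proof (intro CollectI conjI ballI)
  show "F \<subseteq> D" by (rule FD)
  fix W assume "W \<in> components X og F"
  then obtain u0 where u0: "u0 \<in> X" "W = comp_vertices X og F u0" unfolding components_def by blast
  have tW: "\<And>v. v \<in> W \<Longrightarrow> tau v = tau u0" using tau_comp u0 by blast
  have WX: "W \<subseteq> X" using u0 unfolding comp_vertices_def by blast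
  show "(card (W \<inter> dX) = 1 \<and> cycles og (comp_edges og F W) = {}) \<or>
        (W \<inter> dX = {} \<and> (\<exists>C. cycles og (comp_edges og F W) = {C} \<and> odd (card C)))"
  proof (cases "W \<inter> dX = {}")
    case False
    then obtain b where b: "b \<in> W" "b \<in> dX" by blast
    have tb: "tau u0 = {b}" using tW[OF b(1)] tau_dX b by auto
    have "W \<inter> dX = {b}"
    proof
      show "W \<inter> dX \<subseteq> {b}"
      proof
        fix b' assume "b' \<in> W \<inter> dX"
        hence "tau b' = {b'}" "tau b' = {b}" using tau_dX tW tb by auto
        thus "b' \<in> {b}" by simp
      qed
    qed (use b in auto)
    moreover have "cycles og (comp_edges og F W) = {}"
    proof (rule ccontr)
      assume "cycles og (comp_edges og F W) \<noteq> {}"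
      then obtain C where C: "is_cycle og (comp_edges og F W) C" unfolding cycles_def by blast
      hence cy: "is_cycle og F C" and CW: "C \<subseteq> comp_edges og F W" using cycles_comp_edges by auto
      obtain x where x: "x \<in> VC C" using VC_ne[OF cy] by blast
      have "x \<in> W" using comp_edges_VC[OF CW] x by blast
      hence "tau x = {b}" using tW tb by simp
      moreover have "tau x = VC C" by (rule tau_cycle[OF cy x])
      moreover have "VC C \<subseteq> I" by (rule VC_I[OF cy])
      ultimately show False using b by auto
    qed
    ultimately show ?thesis by simp
  next
    case True
    obtain y where y: "y \<in> tau u0" using tau_ne[OF u0(1)] by blast
    then obtain k where k: "y = (H ^^ k) u0" "per y" unfolding tau_def by blast
    have yW: "y \<in> W" using reach_H[OF u0(1)] k Hpow_X[OF u0(1)] u0 unfolding comp_vertices_def by blast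
    have yI: "y \<in> I" using yW True WX by blast
    obtain j where j: "j > 0" "(H ^^ j) y = y" using k unfolding per_def by blast
    define m where "m = least_power H y"
    have m: "(H ^^ m) y = y" "0 < m" using least_powerI[OF j(2) j(1)] unfolding m_def by auto
    have least: "(H ^^ i) y \<noteq> y" if "0 < i" "i < m" for i
      using least_power_le[where f=H and n=i and x=y] that unfolding m_def by auto
    define vs where "vs = map (\<lambda>i. (H ^^ i) y) [0..<m]"
    have fw: "fwd (f ` set vs) vs (map f vs)" unfolding vs_def by (rule orbit_cycle[OF yI m(1) m(2) least])
    let ?C0 = "f ` set vs"
    have cy0: "is_cycle og F ?C0" using fw unfolding fwd_def is_cycle_crep by blast
    have VC0: "VC ?C0 = set vs" using fwd_props(4)[OF fw] .
    have vsW: "set vs \<subseteq> W"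
    proof
      fix x assume "x \<in> set vs"
      then obtain i where "x = (H ^^ i) y" unfolding vs_def by auto
      hence "x = (H ^^ (i + k)) u0" using k by (simp add: funpow_apply_add)
      thus "x \<in> W" using reach_H[OF u0(1)] Hpow_X[OF u0(1)] u0 unfolding comp_vertices_def by blast
    qed
    have C0W: "?C0 \<subseteq> comp_edges og F W"
      unfolding comp_edges_def using cy0 is_cycle_sub VC0 vsW unfolding VC_def by blast
    have "cycles og (comp_edges og F W) = {?C0}"
    proof
      show "{?C0} \<subseteq> cycles og (comp_edges og F W)"
        unfolding cycles_def using cycles_comp_edges cy0 C0W by blast
      show "cycles og (comp_edges og F W) \<subseteq> {?C0}"
      proof
        fix C assume "C \<in> cycles og (comp_edges og F W)"
        hence cy: "is_cycle og F C" and CW: "C \<subseteq> comp_edges og F W"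
          unfolding cycles_def using cycles_comp_edges by auto
        obtain x where x: "x \<in> VC C" using VC_ne[OF cy] by blast
        have xW: "x \<in> W" using comp_edges_VC[OF CW] x by blast
        have "tau x = tau y" using tW[OF xW] tW[OF yW] by simp
        moreover have y0: "y \<in> VC ?C0"
        proof -
          have "(H ^^ 0) y \<in> set vs" unfolding vs_def using m(2) by (simp only: set_map set_upt) (rule imageI, simp)
          thus ?thesis using VC0 by simp
        qed
        ultimately have "VC C = VC ?C0" using tau_cycle[OF cy x] tau_cycle[OF cy0 y0] by simp
        hence "x \<in> VC ?C0" using x by simp
        thus "C \<in> {?C0}" using cycles_disj[OF cy cy0 x] by simp
      qed
    qed
    moreover have "odd (card ?C0)"
    proof (cases "card ?C0 \<ge> 2")
      case True thus ?thesis using odd cy0 unfolding Cyc_def by blast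
    next
      case False
      have "card ?C0 \<ge> 1" using fwd_props(1,5)[OF fw] by simp
      hence "card ?C0 = 1" using False by simp
      thus ?thesis by simp
    qed
    ultimately show ?thesis using True by blast
  qed
qed

lemma adm_Ttri:
  assumes ne: "Cyc F \<noteq> {}" and odd: "\<forall>C\<in>Cyc F. odd (card C)"
  shows "F \<in> Ttri X dX A og rv"
  unfolding Ttri_def
proof (intro CollectI conjI)
  show "F \<in> HQ X dX A og rv" by (rule adm_HQ[OF odd])
  obtain C where C: "C \<in> Cyc F" using ne by blast
  have cy: "is_cycle og F C" using C Cyc_cycle by blast
  have c2: "card C \<ge> 2" "odd (card C)" using C odd unfolding Cyc_def by auto
  have c3: "card C \<ge> 3"
  proof (cases "card C = 2")
    case True thus ?thesis using c2 by simp
  next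
    case False thus ?thesis using c2 by simp
  qed
  obtain x where x: "x \<in> VC C" using VC_ne[OF cy] by blast
  have xX: "x \<in> X" using VC_I[OF cy] x by blast
  have "C \<in> cycles og (comp_edges og F (comp_vertices X og F x))"
    unfolding cycles_def using cycles_comp_edges comp_cycle[OF FD cy x] cy by blast
  thus "\<exists>W\<in>components X og F. \<exists>C\<in>cycles og (comp_edges og F W). card C \<ge> 3"
    using comp_in_components[OF xX] c3 by blast
qed

end

context setting begin

definition is_path :: "('v, 'a) dedge set \<Rightarrow> 'v list \<Rightarrow> ('v, 'a) dedge list \<Rightarrow> bool" where
  "is_path G vs es \<longleftrightarrow> vs \<noteq> [] \<and> length es + 1 = length vs \<and> distinct vs \<and> distinct es \<and>
     set es \<subseteq> G \<and> (\<forall>i<length es. dends og (es ! i) = {vs ! i, vs ! Suc i})"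

lemma path_exists:
  assumes "(adj G)\<^sup>*\<^sup>* x y"
  shows "\<exists>vs es. is_path G vs es \<and> hd vs = x \<and> last vs = y"
  using assms
proof (induction rule: converse_rtranclp_induct)
  case base
  have "is_path G [y] []" unfolding is_path_def by simp
  thus ?case by force
next
  case (step x x1)
  obtain vs es where p: "is_path G vs es" "hd vs = x1" "last vs = y" using step.IH by blast
  obtain e1 where e1: "e1 \<in> G" "dends og e1 = {x, x1}" using step.hyps(1) by blast
  have vne: "vs \<noteq> []" and len: "length es + 1 = length vs" and dv: "distinct vs" and de: "distinct es"
    and sG: "set es \<subseteq> G" and nth: "\<And>i. i < length es \<Longrightarrow> dends og (es ! i) = {vs ! i, vs ! Suc i}"
    using p(1) unfolding is_path_def by auto
  show ?case
  proof (cases "x \<in> set vs")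
    case True
    then obtain j where j: "j < length vs" "vs ! j = x" by (auto simp: in_set_conv_nth)
    let ?vs = "drop j vs" and ?es = "drop j es"
    have "is_path G ?vs ?es"
      unfolding is_path_def
    proof (intro conjI allI impI)
      show "?vs \<noteq> []" using j by simp
      show "length ?es + 1 = length ?vs" using len j by simp
      show "distinct ?vs" using dv by simp
      show "distinct ?es" using de by simp
      show "set ?es \<subseteq> G" using sG set_drop_subset by fastforce
      fix i assume "i < length ?es"
      hence "j + i < length es" by simp
      thus "dends og (?es ! i) = {?vs ! i, ?vs ! Suc i}" using nth len by simp
    qed
    moreover have "hd ?vs = x" using j by (simp add: hd_drop_conv_nth)
    moreover have "last ?vs = y" using j p(3) by simp
    ultimately show ?thesis by blast
  next
    case False
    let ?vs = "x # vs" and ?es = "e1 # es"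
    have e1n: "e1 \<notin> set es"
    proof
      assume "e1 \<in> set es"
      then obtain i where i: "i < length es" "es ! i = e1" by (auto simp: in_set_conv_nth)
      hence "x \<in> {vs ! i, vs ! Suc i}" using nth e1 by auto
      moreover have "i < length vs" "Suc i < length vs" using i len by auto
      ultimately show False using False nth_mem[of i vs] nth_mem[of "Suc i" vs] by auto
    qed
    have "is_path G ?vs ?es"
      unfolding is_path_def
    proof (intro conjI allI impI)
      show "?vs \<noteq> []" by simp
      show "length ?es + 1 = length ?vs" using len by simp
      show "distinct ?vs" using dv False by simp
      show "distinct ?es" using de e1n by simp
      show "set ?es \<subseteq> G" using sG e1 by simp
      fix i assume i: "i < length ?es"
      show "dends og (?es ! i) = {?vs ! i, ?vs ! Suc i}"
      proof (cases i)
        case 0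
        have "vs ! 0 = x1" using p(2) vne by (simp add: hd_conv_nth)
        thus ?thesis using 0 e1 by simp
      next
        case (Suc i')
        thus ?thesis using nth i by simp
      qed
    qed
    moreover have "hd ?vs = x" by simp
    moreover have "last ?vs = y" using p(3) vne by simp
    ultimately show ?thesis by blast
  qed
qed

lemma cycle_through:
  assumes e: "e \<in> F" "dends og e = {x, y}" and xy: "x \<noteq> y" and conn: "(adj (F - {e}))\<^sup>*\<^sup>* x y"
  shows "\<exists>C. is_cycle og F C \<and> e \<in> C"
proof -
  obtain vs es where p: "is_path (F - {e}) vs es" "hd vs = x" "last vs = y" using path_exists[OF conn] by blast
  have vne: "vs \<noteq> []" and len: "length es + 1 = length vs" and dv: "distinct vs" and de: "distinct es"
    and sG: "set es \<subseteq> F - {e}" and nth: "\<And>i. i < length es \<Longrightarrow> dends og (es ! i) = {vs ! i, vs ! Suc i}"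
    using p(1) unfolding is_path_def by auto
  let ?n = "length vs"
  have h0: "vs ! 0 = x" using p(2) vne by (simp add: hd_conv_nth)
  have hl: "vs ! (?n - 1) = y" using p(3) vne by (simp add: last_conv_nth)
  have n2: "?n \<ge> 2"
  proof (rule ccontr)
    assume "\<not> ?n \<ge> 2" moreover have "?n \<noteq> 0" using vne by simp
    ultimately have "?n = 1" by linarith
    thus False using h0 hl xy by simp
  qed
  let ?es = "es @ [e]"
  have "crep F (set ?es) vs ?es"
    unfolding crep_def
  proof (intro conjI allI impI)
    show "set ?es \<subseteq> F" using sG e by auto
    show "length vs \<ge> 1" using n2 by simp
    show "length ?es = length vs" using len by simp
    show "distinct vs" by (rule dv)
    show "distinct ?es" using de sG by auto
    show "set ?es = set ?es" ..
    fix i assume i: "i < length vs"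
    show "dends og (?es ! i) = {vs ! i, vs ! ((i + 1) mod length vs)}"
    proof (cases "i < length es")
      case True
      hence "(i + 1) mod ?n = Suc i" using len by simp
      thus ?thesis using nth[OF True] True by (simp add: nth_append)
    next
      case False
      hence ii: "i = length es" using i len by simp
      hence "(i + 1) mod ?n = 0" using len by simp
      moreover have "?n - 1 = i" using ii len by simp
      hence "vs ! i = y" using hl by simp
      ultimately show ?thesis using ii e h0 by (simp add: nth_append insert_commute)
    qed
  qed
  thus ?thesis using is_cycle_crep by auto
qed

end

context setting begin

lemma VC_ne_gen: assumes "is_cycle og F C" shows "VC C \<noteq> {}"
proof -
  obtain vs es where r: "crep F C vs es" using assms is_cycle_crep by blast
  have "vs \<noteq> []" using r unfolding crep_def by auto
  thus ?thesis using crep_VC[OF r] by simp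
qed

lemma comp_edges_VC_gen: "C \<subseteq> comp_edges og F W \<Longrightarrow> VC C \<subseteq> W"
  unfolding comp_edges_def VC_def by blast

end

locale hqctx = setting X dX A og tm rv
  for X dX :: "'v set" and A :: "'a set" and og tm :: "'a \<Rightarrow> 'v" and rv :: "'a \<Rightarrow> 'a" +
  fixes F :: "('v, 'a) dedge set"
  assumes HQF: "F \<in> HQ X dX A og rv"
begin

lemma FD': "F \<subseteq> D" using HQF HQ_sub by blast

abbreviation "CY \<equiv> cycles og F"
abbreviation "CE \<equiv> \<Union> CY"
abbreviation "RR \<equiv> dX \<union> \<Union>(VC ` CY)"
abbreviation "F' \<equiv> F - CE"

lemma CY_cycle: "C \<in> CY \<Longrightarrow> is_cycle og F C" unfolding cycles_def by simp

lemma CE_RR: assumes "e \<in> F" "v \<in> dends og e" "v \<notin> RR" shows "e \<notin> CE"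
proof
  assume "e \<in> CE"
  then obtain C where "C \<in> CY" "e \<in> C" by blast
  hence "v \<in> VC C" using assms unfolding VC_def by blast
  thus False using assms \<open>C \<in> CY\<close> by blast
qed

lemma RR_X: "RR \<subseteq> X"
proof -
  have "VC C \<subseteq> X" if "C \<in> CY" for C using HQ_VC_I[OF HQF CY_cycle[OF that]] by blast
  thus ?thesis using dXX by blast
qed

lemma reach_RR_F:
  assumes v: "v \<in> X"
  shows "\<exists>r\<in>RR. (adj F)\<^sup>*\<^sup>* v r"
proof -
  let ?W = "comp_vertices X og F v"
  have W: "?W \<in> components X og F" using comp_in_components[OF v] .
  have "(card (?W \<inter> dX) = 1 \<and> cycles og (comp_edges og F ?W) = {}) \<or>
        (?W \<inter> dX = {} \<and> (\<exists>C. cycles og (comp_edges og F ?W) = {C} \<and> odd (card C)))"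
    using HQF W unfolding HQ_def by blast
  then obtain r where r: "r \<in> ?W" "r \<in> RR"
  proof
    assume "card (?W \<inter> dX) = 1 \<and> cycles og (comp_edges og F ?W) = {}"
    hence "?W \<inter> dX \<noteq> {}" by (intro notI) simp
    then obtain b where "b \<in> ?W \<inter> dX" by blast
    thus ?thesis using that by blast
  next
    assume "?W \<inter> dX = {} \<and> (\<exists>C. cycles og (comp_edges og F ?W) = {C} \<and> odd (card C))"
    then obtain C where C: "C \<in> cycles og (comp_edges og F ?W)" by blast
    hence cy: "is_cycle og F C" "C \<subseteq> comp_edges og F ?W" using cycles_comp_edges unfolding cycles_def by auto
    obtain x where x: "x \<in> VC C" using cy(1) VC_ne_gen by blast
    have "x \<in> ?W" using comp_edges_VC_gen[OF cy(2)] x by blast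
    moreover have "C \<in> CY" using cy(1) unfolding cycles_def by simp
    ultimately show ?thesis using that x by blast
  qed
  thus ?thesis unfolding comp_vertices_def by blast
qed

lemma cut_RR:
  assumes "(adj F)\<^sup>*\<^sup>* v r" "r \<in> RR"
  shows "\<exists>r'\<in>RR. (adj F')\<^sup>*\<^sup>* v r'"
  using assms
proof (induction rule: converse_rtranclp_induct)
  case base thus ?case by blast
next
  case (step v v1)
  obtain r' where r': "r' \<in> RR" "(adj F')\<^sup>*\<^sup>* v1 r'" using step by blast
  show ?case
  proof (cases "v \<in> RR")
    case True thus ?thesis by blast
  next
    case False
    obtain e where e: "e \<in> F" "dends og e = {v, v1}" using step.hyps(1) by blast
    have "e \<notin> CE" using CE_RR[OF e(1) _ False] e(2) by blast
    hence "adj F' v v1" using e by blast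
    hence "(adj F')\<^sup>*\<^sup>* v r'" using r'(2) by (rule converse_rtranclp_into_rtranclp)
    thus ?thesis using r'(1) by blast
  qed
qed

lemma reach_RR: "v \<in> X \<Longrightarrow> \<exists>r\<in>RR. (adj F')\<^sup>*\<^sup>* v r"
  using reach_RR_F cut_RR by blast

definition dst :: "'v \<Rightarrow> nat" where
  "dst v = (LEAST n. \<exists>r\<in>RR. ((adj F') ^^ n) v r)"

lemma dst_ex: assumes "v \<in> X" shows "\<exists>r\<in>RR. ((adj F') ^^ dst v) v r"
proof -
  obtain r where r: "r \<in> RR" "(adj F')\<^sup>*\<^sup>* v r" using reach_RR[OF assms] by blast
  obtain n where "((adj F') ^^ n) v r" using rtranclp_imp_relpowp[OF r(2)] by blast
  note r(1) this
  hence "\<exists>n. \<exists>r\<in>RR. ((adj F') ^^ n) v r" by blast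
  thus ?thesis unfolding dst_def by (rule LeastI_ex)
qed

lemma dst_le: "r \<in> RR \<Longrightarrow> ((adj F') ^^ n) v r \<Longrightarrow> dst v \<le> n"
  unfolding dst_def by (rule Least_le) blast

lemma dst_step:
  assumes v: "v \<in> X" "v \<notin> RR"
  shows "\<exists>e\<in>F'. \<exists>y. dends og e = {v, y} \<and> dst y < dst v"
proof -
  obtain r where r: "r \<in> RR" "((adj F') ^^ dst v) v r" using dst_ex[OF v(1)] by blast
  show ?thesis
  proof (cases "dst v")
    case 0
    hence "v = r" using r by simp
    thus ?thesis using v r by simp
  next
    case (Suc m)
    hence "((adj F') ^^ Suc m) v r" using r by simp
    from relpowp_Suc_D2[OF this] obtain y where y: "adj F' v y" "((adj F') ^^ m) y r" by blast
    have "dst y \<le> m" using dst_le[OF r(1) y(2)] .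
    hence lt: "dst y < dst v" using Suc by simp
    from y(1) obtain e where e: "e \<in> F'" "dends og e = {v, y}" by blast
    show ?thesis using e lt by blast
  qed
qed

definition down :: "'v \<Rightarrow> ('v, 'a) dedge" where
  "down v = (SOME e. e \<in> F' \<and> (\<exists>y. dends og e = {v, y} \<and> dst y < dst v))"

lemma down: assumes "v \<in> X" "v \<notin> RR"
  shows "down v \<in> F' \<and> (\<exists>y. dends og (down v) = {v, y} \<and> dst y < dst v)"
proof -
  have "\<exists>e. e \<in> F' \<and> (\<exists>y. dends og e = {v, y} \<and> dst y < dst v)" using dst_step[OF assms] by blast
  thus ?thesis unfolding down_def by (rule someI_ex)
qed

definition cyc_of :: "'v \<Rightarrow> ('v, 'a) dedge set" where
  "cyc_of v = (THE C. C \<in> CY \<and> v \<in> VC C)"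

lemma cyc_of: assumes "C \<in> CY" "v \<in> VC C" shows "cyc_of v = C"
  unfolding cyc_of_def
proof (rule the_equality)
  show "C \<in> CY \<and> v \<in> VC C" using assms by blast
  fix C' assume "C' \<in> CY \<and> v \<in> VC C'"
  thus "C' = C" using HQ_disj[OF HQF] CY_cycle assms by blast
qed

definition crp :: "('v, 'a) dedge set \<Rightarrow> 'v list \<times> ('v, 'a) dedge list" where
  "crp C = (SOME p. crep F C (fst p) (snd p))"

lemma crp: assumes "C \<in> CY" shows "crep F C (fst (crp C)) (snd (crp C))"
proof -
  obtain vs es where "crep F C vs es" using CY_cycle[OF assms] is_cycle_crep by blast
  hence "\<exists>p. crep F C (fst p) (snd p)" by (intro exI[of _ "(vs, es)"]) simp
  thus ?thesis unfolding crp_def by (rule someI_ex)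
qed

definition cycedge :: "'v \<Rightarrow> ('v, 'a) dedge" where
  "cycedge v = (let C = cyc_of v; vs = fst (crp C); es = snd (crp C)
                in es ! (THE i. i < length vs \<and> vs ! i = v))"

lemma cycedge:
  assumes C: "C \<in> CY" and i: "i < length (fst (crp C))"
  shows "cycedge (fst (crp C) ! i) = snd (crp C) ! i"
proof -
  let ?vs = "fst (crp C)" and ?es = "snd (crp C)"
  have r: "crep F C ?vs ?es" by (rule crp[OF C])
  have v: "?vs ! i \<in> VC C" using crep_VC[OF r] i by simp
  have co: "cyc_of (?vs ! i) = C" by (rule cyc_of[OF C v])
  have d: "distinct ?vs" using r unfolding crep_def by simp
  have "(THE j. j < length ?vs \<and> ?vs ! j = ?vs ! i) = i"
    by (rule the_equality) (use i d in \<open>auto simp: nth_eq_iff_index_eq\<close>)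
  thus ?thesis unfolding cycedge_def Let_def co by simp
qed

definition gg :: "'v \<Rightarrow> ('v, 'a) dedge" where
  "gg v = (if v \<in> I then (if v \<in> \<Union>(VC ` CY) then cycedge v else down v) else undefined)"

lemma gg_cyc:
  assumes C: "C \<in> CY" and v: "v \<in> VC C"
  shows "gg v \<in> C \<and> v \<in> dends og (gg v)"
proof -
  let ?vs = "fst (crp C)" and ?es = "snd (crp C)"
  have r: "crep F C ?vs ?es" by (rule crp[OF C])
  obtain i where i: "i < length ?vs" "?vs ! i = v" using v crep_VC[OF r] by (auto simp: in_set_conv_nth)
  have vI: "v \<in> I" using HQ_VC_I[OF HQF CY_cycle[OF C]] v by blast
  have "gg v = ?es ! i" unfolding gg_def using vI v C cycedge[OF C i(1)] i(2) by auto
  moreover have "?es ! i \<in> C"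
  proof -
    have "length ?es = length ?vs" "set ?es = C" using r unfolding crep_def by auto
    thus ?thesis using i nth_mem[of i ?es] by simp
  qed
  moreover have "v \<in> dends og (?es ! i)" using r i unfolding crep_def by auto
  ultimately show ?thesis by simp
qed


lemma gg_non:
  assumes vI: "v \<in> I" and nc: "v \<notin> \<Union>(VC ` CY)"
  shows "gg v \<in> F' \<and> (\<exists>y. dends og (gg v) = {v, y} \<and> dst y < dst v)"
proof -
  have nR: "v \<notin> RR" using vI nc by blast
  have vX: "v \<in> X" using vI by blast
  have "down v \<in> F' \<and> (\<exists>y. dends og (down v) = {v, y} \<and> dst y < dst v)" by (rule down[OF vX nR])
  thus ?thesis unfolding gg_def using vI nc by simp
qed

lemma gg_in: assumes "v \<in> I" shows "gg v \<in> F \<and> v \<in> dends og (gg v)"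
proof (cases "v \<in> \<Union>(VC ` CY)")
  case True
  then obtain C where "C \<in> CY" "v \<in> VC C" by blast
  thus ?thesis using gg_cyc CY_cycle is_cycle_sub by blast
next
  case False thus ?thesis using gg_non[OF assms] by auto
qed

lemma gg_inj: "inj_on gg I"
proof (rule inj_onI)
  fix v v' assume v: "v \<in> I" and v': "v' \<in> I" and e: "gg v = gg v'"
  show "v = v'"
  proof (cases "v \<in> \<Union>(VC ` CY)")
    case True
    then obtain C where C: "C \<in> CY" "v \<in> VC C" by blast
    have gC: "gg v \<in> C" using gg_cyc[OF C] by blast
    show ?thesis
    proof (cases "v' \<in> \<Union>(VC ` CY)")
      case True
      then obtain C' where C': "C' \<in> CY" "v' \<in> VC C'" by blast
      have gC': "gg v' \<in> C'" using gg_cyc[OF C'] by blast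
      have "gg v \<in> D" using gg_in[OF v] FD' by blast
      then obtain x where x: "x \<in> dends og (gg v)" using dends_nonempty by blast
      have "x \<in> VC C" "x \<in> VC C'" using x gC gC' e unfolding VC_def by auto
      hence CC: "C = C'" using HQ_disj[OF HQF CY_cycle[OF C(1)] CY_cycle[OF C'(1)]] by blast
      let ?vs = "fst (crp C)" and ?es = "snd (crp C)"
      have r: "crep F C ?vs ?es" by (rule crp[OF C(1)])
      obtain i where i: "i < length ?vs" "?vs ! i = v" using C(2) crep_VC[OF r] by (auto simp: in_set_conv_nth)
      obtain j where j: "j < length ?vs" "?vs ! j = v'" using C'(2) CC crep_VC[OF r] by (auto simp: in_set_conv_nth)
      have "gg v = ?es ! i" unfolding gg_def using v C cycedge[OF C(1) i(1)] i(2) by auto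
      moreover have "gg v' = ?es ! j" unfolding gg_def using v' C' CC cycedge[OF C(1) j(1)] j(2) by auto
      ultimately have "?es ! i = ?es ! j" using e by simp
      moreover have "distinct ?es" "length ?es = length ?vs" using r unfolding crep_def by auto
      ultimately have "i = j" using i j by (simp add: nth_eq_iff_index_eq)
      thus ?thesis using i j by simp
    next
      case False
      have "gg v' \<in> F'" using gg_non[OF v' False] by blast
      moreover have "gg v \<in> CE" using gC C by blast
      ultimately show ?thesis using e by simp
    qed
  next
    case False
    obtain y where y: "dends og (gg v) = {v, y}" "dst y < dst v" using gg_non[OF v False] by blast
    show ?thesis
    proof (cases "v' \<in> \<Union>(VC ` CY)")
      case True
      then obtain C' where C': "C' \<in> CY" "v' \<in> VC C'" by blast
      have "gg v' \<in> CE" using gg_cyc[OF C'] C' by blast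
      moreover have "gg v \<in> F'" using gg_non[OF v False] by blast
      ultimately show ?thesis using e by simp
    next
      case False2: False
      obtain y' where y': "dends og (gg v') = {v', y'}" "dst y' < dst v'" using gg_non[OF v' False2] by blast
      show ?thesis
      proof (rule ccontr)
        assume ne: "v \<noteq> v'"
        have "{v, y} = {v', y'}" using y y' e by simp
        hence "v = y' \<and> y = v'" using ne by (auto simp: doubleton_eq_iff)
        thus False using y(2) y'(2) by simp
      qed
    qed
  qed
qed

lemma Rconn:
  assumes r1: "r1 \<in> RR" and r2: "r2 \<in> RR" and c: "(adj F)\<^sup>*\<^sup>* r1 r2"
  shows "r1 = r2 \<or> (\<exists>C\<in>CY. r1 \<in> VC C \<and> r2 \<in> VC C)"
proof -
  have r1X: "r1 \<in> X" using r1 RR_X by blast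
  have r2X: "r2 \<in> X" using r2 RR_X by blast
  let ?W = "comp_vertices X og F r1"
  have r2W: "r2 \<in> ?W" using c r2X unfolding comp_vertices_def by blast
  have WW: "comp_vertices X og F r2 = ?W" using comp_eq[OF FD' r2W] .
  show ?thesis
  proof (cases "r1 \<in> dX")
    case True
    have W: "?W \<in> components X og F" using comp_in_components[OF r1X] .
    have r1W: "r1 \<in> ?W" using comp_self[OF r1X] .
    have "(card (?W \<inter> dX) = 1 \<and> cycles og (comp_edges og F ?W) = {}) \<or>
        (?W \<inter> dX = {} \<and> (\<exists>C. cycles og (comp_edges og F ?W) = {C} \<and> odd (card C)))"
      using HQF W unfolding HQ_def by blast
    hence br: "card (?W \<inter> dX) = 1" "cycles og (comp_edges og F ?W) = {}" using True r1W by auto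
    show ?thesis
    proof (cases "r2 \<in> dX")
      case True2: True
      have "r1 \<in> ?W \<inter> dX" "r2 \<in> ?W \<inter> dX" using True True2 r1W r2W by auto
      hence "r1 = r2" using br(1) by (metis card_1_singletonE singletonD)
      thus ?thesis by simp
    next
      case False
      then obtain C where C: "C \<in> CY" "r2 \<in> VC C" using r2 by blast
      have "cycles og (comp_edges og F (comp_vertices X og F r2)) = {C}"
        using HQ_cycle(1)[OF HQF CY_cycle[OF C(1)] C(2)] .
      thus ?thesis using br(2) WW by simp
    qed
  next
    case False
    then obtain C where C: "C \<in> CY" "r1 \<in> VC C" using r1 by blast
    have cyc: "cycles og (comp_edges og F ?W) = {C}" "?W \<inter> dX = {}"
      using HQ_cycle[OF HQF CY_cycle[OF C(1)] C(2)] by auto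
    have "r2 \<notin> dX" using cyc(2) r2W by blast
    then obtain C' where C': "C' \<in> CY" "r2 \<in> VC C'" using r2 by blast
    have "cycles og (comp_edges og F (comp_vertices X og F r2)) = {C'}"
      using HQ_cycle(1)[OF HQF CY_cycle[OF C'(1)] C'(2)] .
    hence "C = C'" using cyc(1) WW by simp
    thus ?thesis using C C' by blast
  qed
qed

lemma gg_surj: "gg ` I = F"
proof
  show "gg ` I \<subseteq> F" using gg_in by blast
  show "F \<subseteq> gg ` I"
  proof
    fix e assume eF: "e \<in> F"
    show "e \<in> gg ` I"
    proof (cases "e \<in> CE")
      case True
      then obtain C where C: "C \<in> CY" "e \<in> C" by blast
      let ?vs = "fst (crp C)" and ?es = "snd (crp C)"
      have r: "crep F C ?vs ?es" by (rule crp[OF C(1)])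
      have "e \<in> set ?es" using C(2) r unfolding crep_def by simp
      then obtain i where i: "i < length ?es" "?es ! i = e" by (auto simp: in_set_conv_nth)
      have i': "i < length ?vs" using i r unfolding crep_def by simp
      have v: "?vs ! i \<in> VC C" using crep_VC[OF r] i' by simp
      have vI: "?vs ! i \<in> I" using HQ_VC_I[OF HQF CY_cycle[OF C(1)]] v by blast
      have "gg (?vs ! i) = ?es ! i" unfolding gg_def using vI v C(1) cycedge[OF C(1) i'] by auto
      thus ?thesis using i vI by (metis imageI)
    next
      case False
      show ?thesis
      proof (rule ccontr)
        assume nimg: "e \<notin> gg ` I"
        have eD: "e \<in> D" using eF FD' by blast
        have notloop: "\<And>x. e \<noteq> Lp x"
        proof
          fix x assume "e = Lp x"
          hence "{e} \<in> CY" using loop_cycle eF unfolding cycles_def by simp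
          thus False using False by blast
        qed
        obtain a where a: "a \<in> A" "e = Ed (edge_of rv a)"
          using eD notloop by (cases rule: D_cases) auto
        let ?x = "og a" and ?y = "tm a"
        have ends: "dends og e = {?x, ?y}" using a dends_Ed by simp
        have xy: "?x \<noteq> ?y" using arc[OF a(1)] by simp
        have xX: "?x \<in> X" and yX: "?y \<in> X" using arc[OF a(1)] by auto
        have reach: "\<exists>r\<in>RR. (adj (F - {e}))\<^sup>*\<^sup>* v r" if vX: "v \<in> X" for v
          using vX
        proof (induction "dst v" arbitrary: v rule: less_induct)
          case less
          show ?case
          proof (cases "v \<in> RR")
            case True thus ?thesis by blast
          next
            case False
            have vI: "v \<in> I" using less.prems False by blast
            have nc: "v \<notin> \<Union>(VC ` CY)" using False by blast
            obtain y where y: "dends og (gg v) = {v, y}" "dst y < dst v" using gg_non[OF vI nc] by blast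
            have gF: "gg v \<in> F" using gg_in[OF vI] by blast
            have ne: "gg v \<noteq> e" using nimg vI by blast
            have adjv: "adj (F - {e}) v y" using y gF ne by blast
            have "y \<in> X" using y gF FD' dends_sub by blast
            then obtain r where rr: "r \<in> RR" "(adj (F - {e}))\<^sup>*\<^sup>* y r" using less.hyps y(2) by blast
            have "(adj (F - {e}))\<^sup>*\<^sup>* v r" using adjv rr(2) by (rule converse_rtranclp_into_rtranclp)
            thus ?thesis using rr(1) by blast
          qed
        qed
        obtain r1 where r1: "r1 \<in> RR" "(adj (F - {e}))\<^sup>*\<^sup>* ?x r1" using reach[OF xX] by blast
        obtain r2 where r2: "r2 \<in> RR" "(adj (F - {e}))\<^sup>*\<^sup>* ?y r2" using reach[OF yX] by blast
        have sub: "F - {e} \<subseteq> F" by blast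
        have "adj F ?x ?y" using eF ends by blast
        hence "(adj F)\<^sup>*\<^sup>* r1 r2"
          using rtranclp_trans[OF rtranclp.rtrancl_into_rtrancl[OF rtranclp_adj_sym[OF rtranclp_adj_mono[OF r1(2) sub]]]
              rtranclp_adj_mono[OF r2(2) sub]] by blast
        hence "r1 = r2 \<or> (\<exists>C\<in>CY. r1 \<in> VC C \<and> r2 \<in> VC C)" using Rconn r1(1) r2(1) by blast
        hence rr: "(adj (F - {e}))\<^sup>*\<^sup>* r1 r2"
        proof
          assume "r1 = r2" thus ?thesis by simp
        next
          assume "\<exists>C\<in>CY. r1 \<in> VC C \<and> r2 \<in> VC C"
          then obtain C where C: "C \<in> CY" "r1 \<in> VC C" "r2 \<in> VC C" by blast
          obtain vs es where rc: "crep F C vs es" using CY_cycle[OF C(1)] is_cycle_crep by blast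
          have "(adj C)\<^sup>*\<^sup>* r1 r2" using crep_conn2[OF rc] crep_VC[OF rc] C by simp
          moreover have "C \<subseteq> F - {e}" using C(1) False CY_cycle[OF C(1)] is_cycle_sub by blast
          ultimately show ?thesis by (rule rtranclp_adj_mono)
        qed
        have "(adj (F - {e}))\<^sup>*\<^sup>* ?x ?y"
          using rtranclp_trans[OF rtranclp_trans[OF r1(2) rr] rtranclp_adj_sym[OF r2(2)]] .
        then obtain C where "is_cycle og F C" "e \<in> C" using cycle_through[OF eF ends xy] by blast
        hence "e \<in> CE" unfolding cycles_def by blast
        thus False using False by blast
      qed
    qed
  qed
qed

definition gfun :: "'v \<Rightarrow> ('v, 'a) dedge" where
  "gfun = restrict gg I"

lemma exists_adm: "adm F gfun"
  unfolding adm_def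
proof (intro conjI)
  show "gfun \<in> I \<rightarrow>\<^sub>E F" unfolding gfun_def using gg_in by auto
  show "inj_on gfun I" unfolding gfun_def using gg_inj by (simp add: inj_on_def)
  show "gfun ` I = F" unfolding gfun_def using gg_surj by simp
  show "\<forall>u\<in>I. u \<in> dends og (gfun u)" unfolding gfun_def using gg_in by simp
qed

end

context admctx begin

lemma f_undef: "v \<notin> I \<Longrightarrow> f v = undefined"
  using f_ext unfolding PiE_def extensional_def by blast

lemma compat_perm: "compat p \<Longrightarrow> p permutes I" unfolding compat_def by blast

lemma Phi_adm:
  assumes cp: "compat p"
  shows "adm F (f \<circ> inv p)"
  unfolding adm_def
proof (intro conjI ballI)
  have pp: "p permutes I" using compat_perm[OF cp] .
  have ip: "inv p permutes I" using permutes_inv[OF pp] .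
  have img: "inv p ` I = I" using permutes_image[OF ip] .
  show "f \<circ> inv p \<in> I \<rightarrow>\<^sub>E F"
  proof (rule PiE_I)
    fix v assume "v \<in> I"
    hence "inv p v \<in> I" using img by blast
    thus "(f \<circ> inv p) v \<in> F" using f_in by simp
  next
    fix v assume "v \<notin> I"
    hence "inv p v = v" using permutes_not_in[OF ip] by blast
    thus "(f \<circ> inv p) v = undefined" using f_undef \<open>v \<notin> I\<close> by simp
  qed
  have fi: "inj_on f (inv p ` I)" using img f_inj by simp
  show "inj_on (f \<circ> inv p) I"
    by (rule comp_inj_on[OF inj_on_subset[OF permutes_inj[OF ip] subset_UNIV] fi])
  show "(f \<circ> inv p) ` I = F" by (simp only: image_comp[symmetric] img f_img)
  fix v assume v: "v \<in> I"
  let ?u = "inv p v"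
  have u: "?u \<in> I" using v img by blast
  have "p ?u = v" using permutes_inverses(1)[OF pp] .
  thus "v \<in> dends og ((f \<circ> inv p) v)" using cp u unfolding compat_def by force
qed

lemma card_adm: "card {g. adm F g} = card {p. compat p}"
proof -
  let ?Phi = "\<lambda>p. f \<circ> inv p"
  have "bij_betw ?Phi {p. compat p} {g. adm F g}"
    unfolding bij_betw_def
  proof
    show "inj_on ?Phi {p. compat p}"
    proof (rule inj_onI)
      fix p1 p2 assume p1: "p1 \<in> {p. compat p}" and p2: "p2 \<in> {p. compat p}" and e: "?Phi p1 = ?Phi p2"
      have pp1: "p1 permutes I" and pp2: "p2 permutes I" using p1 p2 compat_perm by auto
      have ii: "inv p1 = inv p2"
      proof
        fix v show "inv p1 v = inv p2 v"
        proof (cases "v \<in> I")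
          case True
          have a: "inv p1 v \<in> I" "inv p2 v \<in> I"
            using True permutes_image[OF permutes_inv[OF pp1]] permutes_image[OF permutes_inv[OF pp2]] by blast+
          have "f (inv p1 v) = f (inv p2 v)" using e by (metis comp_apply)
          thus ?thesis using f_inj a by (simp add: inj_on_def)
        next
          case False thus ?thesis using permutes_not_in[OF permutes_inv[OF pp1]] permutes_not_in[OF permutes_inv[OF pp2]] by metis
        qed
      qed
      show "p1 = p2" using permutes_inv_inv[OF pp1] permutes_inv_inv[OF pp2] ii by metis
    qed
    show "?Phi ` {p. compat p} = {g. adm F g}"
    proof
      show "?Phi ` {p. compat p} \<subseteq> {g. adm F g}" using Phi_adm by blast
      show "{g. adm F g} \<subseteq> ?Phi ` {p. compat p}"
      proof
        fix g assume "g \<in> {g. adm F g}"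
        hence ag: "adm F g" by simp
        have gI: "\<And>v. v \<in> I \<Longrightarrow> g v \<in> F" and ginj: "inj_on g I" and gimg: "g ` I = F"
          and gown: "\<And>v. v \<in> I \<Longrightarrow> v \<in> dends og (g v)" and gext: "g \<in> I \<rightarrow>\<^sub>E F"
          using ag unfolding adm_def by auto
        define q where "q v = (if v \<in> I then own (g v) else v)" for v
        have qI: "q v \<in> I" if "v \<in> I" for v using own gI that unfolding q_def by simp
        have qinj: "inj_on q I"
        proof (rule inj_onI)
          fix v v' assume v: "v \<in> I" and v': "v' \<in> I" and e: "q v = q v'"
          have "g v = f (own (g v))" using own gI v by simp
          also have "\<dots> = f (own (g v'))" using e v v' unfolding q_def by simp
          also have "\<dots> = g v'" using own gI v' by simp
          finally show "v = v'" using ginj v v' by (simp add: inj_on_def)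
        qed
        have qimg: "q ` I = I"
        proof
          show "q ` I \<subseteq> I" using qI by blast
          show "I \<subseteq> q ` I"
          proof
            fix u assume u: "u \<in> I"
            have "f u \<in> g ` I" using f_in u gimg by simp
            then obtain v where v0: "f u = g v" "v \<in> I" by (rule imageE)
            hence v: "v \<in> I" "g v = f u" by auto
            have "q v = u" unfolding q_def using v u own_f by simp
            thus "u \<in> q ` I" using v by blast
          qed
        qed
        have qp: "q permutes I"
          by (rule bij_imp_permutes) (use qinj qimg in \<open>auto simp: bij_betw_def q_def\<close>)
        define p where "p = inv q"
        have pp: "p permutes I" unfolding p_def by (rule permutes_inv[OF qp])
        have cp: "compat p" unfolding compat_def
        proof (intro conjI ballI)
          show "p permutes I" by (rule pp)
          fix u assume u: "u \<in> I"
          let ?v = "p u"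
          have v: "?v \<in> I" using permutes_image[OF pp] u by blast
          have "q ?v = u" unfolding p_def using permutes_inverses(1)[OF qp] .
          hence "own (g ?v) = u" using v unfolding q_def by simp
          hence "g ?v = f u" using own gI v by metis
          thus "p u \<in> dends og (f u)" using gown v by metis
        qed
        have "?Phi p = f \<circ> q" unfolding p_def using permutes_inv_inv[OF qp] by simp
        also have "f \<circ> q = g"
        proof
          fix v show "(f \<circ> q) v = g v"
          proof (cases "v \<in> I")
            case True thus ?thesis unfolding q_def using own gI by simp
          next
            case False
            hence gv: "g v = undefined" using gext unfolding PiE_def extensional_def by blast
            have qv: "q v = v" unfolding q_def using False by auto
            show ?thesis using gv qv f_undef[OF False] by simp
          qed
        qed
        finally show "g \<in> ?Phi ` {p. compat p}" using cp by blast
      qed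
    qed
  qed
  thus ?thesis by (simp add: bij_betw_same_card)
qed

end

context admctx begin

lemma inner_sum:
  "(\<Sum>p\<in>{p. p permutes I \<and> (\<forall>u\<in>I. p u \<in> dends og (f u))}. of_int (sign p) * (1 - (-1) ^ card {u\<in>I. p u \<noteq> u}))
   = (if \<forall>C\<in>Cyc F. odd (card C) then 2 ^ card (Cyc F) else 0) - (if Cyc F = {} then 1 else (0::complex))"
  using compat_sum unfolding compat_def Vb_def by simp

lemma card_adm2: "card {g. adm F g} = 2 ^ card (Cyc F)"
  using card_adm card_compat by simp

end

context hqctx begin

lemma bnum_eq: "bnum X og F = card (Cyc F)"
proof -
  let ?S = "{W\<in>components X og F. \<exists>C\<in>cycles og (comp_edges og F W). card C \<ge> 3}"
  define pick where "pick C = (SOME x. x \<in> VC C)" for C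
  let ?phi = "\<lambda>C. comp_vertices X og F (pick C)"
  have pick: "pick C \<in> VC C" if "is_cycle og F C" for C
    unfolding pick_def using VC_ne_gen[OF that] by (simp add: some_in_eq)
  have c3: "card C \<ge> 3" if "C \<in> Cyc F" for C
  proof -
    have "card C \<ge> 2" "odd (card C)" using that HQ_odd[OF HQF] unfolding Cyc_def by auto
    thus ?thesis by (cases "card C = 2") auto
  qed
  have "bij_betw ?phi (Cyc F) ?S"
    unfolding bij_betw_def
  proof
    show "inj_on ?phi (Cyc F)"
    proof (rule inj_onI)
      fix C C' assume C: "C \<in> Cyc F" and C': "C' \<in> Cyc F" and e: "?phi C = ?phi C'"
      have cy: "is_cycle og F C" "is_cycle og F C'" using C C' unfolding Cyc_def by auto
      have h1: "cycles og (comp_edges og F (?phi C)) = {C}" using HQ_cycle(1)[OF HQF cy(1) pick[OF cy(1)]] .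
      have h2: "cycles og (comp_edges og F (?phi C')) = {C'}" using HQ_cycle(1)[OF HQF cy(2) pick[OF cy(2)]] .
      from h1 have "cycles og (comp_edges og F (?phi C')) = {C}" by (simp only: e)
      with h2 show "C = C'" by simp
    qed
    show "?phi ` Cyc F = ?S"
    proof
      show "?phi ` Cyc F \<subseteq> ?S"
      proof
        fix W assume "W \<in> ?phi ` Cyc F"
        then obtain C where C: "C \<in> Cyc F" "W = ?phi C" by blast
        have cy: "is_cycle og F C" using C unfolding Cyc_def by auto
        have pX: "pick C \<in> X" using HQ_VC_I[OF HQF cy] pick[OF cy] by blast
        have "C \<in> cycles og (comp_edges og F W)"
          unfolding cycles_def C(2) using cycles_comp_edges comp_cycle(2)[OF FD' cy pick[OF cy]] cy by blast
        moreover have "W \<in> components X og F" using comp_in_components[OF pX] C(2) by simp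
        ultimately show "W \<in> ?S" using c3[OF C(1)] by (intro CollectI conjI bexI)
      qed
      show "?S \<subseteq> ?phi ` Cyc F"
      proof
        fix W assume W: "W \<in> ?S"
        have WC: "W \<in> components X og F" using W by simp
        then obtain u where u: "u \<in> X" "W = comp_vertices X og F u" unfolding components_def by (rule imageE) simp
        have "\<exists>C\<in>cycles og (comp_edges og F W). card C \<ge> 3" using W by simp
        then obtain C where C: "C \<in> cycles og (comp_edges og F W)" "card C \<ge> 3" by (rule bexE) simp
        have cy: "is_cycle og F C" and CW: "C \<subseteq> comp_edges og F W"
          using C(1) cycles_comp_edges unfolding cycles_def by auto
        have CC: "C \<in> Cyc F" using cy C(2) unfolding Cyc_def by simp
        have "pick C \<in> W" using comp_edges_VC_gen[OF CW] pick[OF cy] by blast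
        hence "comp_vertices X og F (pick C) = comp_vertices X og F u" using comp_eq[OF FD'] u by blast
        hence "?phi C = W" using u by simp
        thus "W \<in> ?phi ` Cyc F" using CC by blast
      qed
    qed
  qed
  hence "card (Cyc F) = card ?S" by (rule bij_betw_same_card)
  thus ?thesis unfolding bnum_def by simp
qed

end

context setting begin

lemma Ttri_conv:
  assumes T: "F \<in> Ttri X dX A og rv"
  shows "Cyc F \<noteq> {} \<and> (\<forall>C\<in>Cyc F. odd (card C))"
proof
  have H: "F \<in> HQ X dX A og rv" using T unfolding Ttri_def by blast
  obtain W C where "W \<in> components X og F" "C \<in> cycles og (comp_edges og F W)" "card C \<ge> 3"
    using T unfolding Ttri_def by blast
  hence "is_cycle og F C" "card C \<ge> 2" using cycles_comp_edges unfolding cycles_def by auto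
  thus "Cyc F \<noteq> {}" unfolding Cyc_def by blast
  show "\<forall>C\<in>Cyc F. odd (card C)" using HQ_odd[OF H] unfolding Cyc_def by blast
qed

lemma mk_admctx: "F \<subseteq> D \<Longrightarrow> adm F f \<Longrightarrow> admctx X dX A og tm rv F f"
  by (intro admctx.intro admctx_axioms.intro) (rule setting_axioms)

lemma mk_hqctx: "F \<in> HQ X dX A og rv \<Longrightarrow> hqctx X dX A og tm rv F"
  by (intro hqctx.intro hqctx_axioms.intro) (rule setting_axioms)

lemma prod_if_all:
  fixes g :: "'x \<Rightarrow> complex"
  assumes "finite S"
  shows "(\<Prod>u\<in>S. if P u then g u else 0) = (if \<forall>u\<in>S. P u then \<Prod>u\<in>S. g u else 0)"
proof (cases "\<forall>u\<in>S. P u")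
  case True thus ?thesis by (simp cong: prod.cong)
next
  case False
  then obtain u where "u \<in> S" "\<not> P u" by blast
  thus ?thesis using assms by (simp add: prod_zero_iff) blast
qed

definition TT :: "('v \<Rightarrow> ('v, 'a) dedge \<Rightarrow> complex) \<Rightarrow> ('v, 'a) dedge set \<Rightarrow> complex" where
  "TT N F = (\<Sum>f\<in>{f\<in>I \<rightarrow>\<^sub>E D. inj_on f I \<and> f ` I = F}.
          \<Sum>p\<in>{p. p permutes I}. of_int (sign p) * (\<Prod>u\<in>I. N u (f u) * N (p u) (f u)))"

lemma TT_diff:
  assumes FD: "F \<subseteq> D"
  shows "TT Nq F - TT Ns F = (if F \<in> Ttri X dX A og rv then 4 ^ bnum X og F else 0)"
proof -
  let ?B = "{f\<in>I \<rightarrow>\<^sub>E D. inj_on f I \<and> f ` I = F}"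
  let ?P = "{p. p permutes I}"
  let ?ad = "\<lambda>f. \<forall>u\<in>I. u \<in> dends og (f u)"
  let ?cp = "\<lambda>f p. \<forall>u\<in>I. p u \<in> dends og (f u)"
  let ?phi = "\<lambda>p. of_int (sign p) * (1 - (-1) ^ card {u\<in>I. p u \<noteq> u}) :: complex"
  have finB: "finite ?B" using finI finD by (simp add: finite_PiE)
  have finP: "finite ?P" using finI finite_permutations by blast
  have tm_eq: "(\<Prod>u\<in>I. Nq u (f u) * Nq (p u) (f u)) - (\<Prod>u\<in>I. Ns u (f u) * Ns (p u) (f u)) =
      (if ?ad f \<and> ?cp f p then 1 - (-1) ^ card {u\<in>I. p u \<noteq> u} else 0)"
    if f: "f \<in> ?B" for f p
  proof -
    have fD: "\<And>u. u \<in> I \<Longrightarrow> f u \<in> D" using f by blast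
    have q: "(\<Prod>u\<in>I. Nq u (f u) * Nq (p u) (f u)) = (if ?ad f \<and> ?cp f p then 1 else 0)"
    proof -
      have "(\<Prod>u\<in>I. Nq u (f u) * Nq (p u) (f u)) =
          (\<Prod>u\<in>I. if u \<in> dends og (f u) \<and> p u \<in> dends og (f u) then 1 else 0)"
        by (simp add: Nq_prod)
      also have "\<dots> = (if \<forall>u\<in>I. u \<in> dends og (f u) \<and> p u \<in> dends og (f u) then \<Prod>u\<in>I. 1 else 0)"
        by (rule prod_if_all[OF finI])
      finally show ?thesis by auto
    qed
    have s: "(\<Prod>u\<in>I. Ns u (f u) * Ns (p u) (f u)) = (if ?ad f \<and> ?cp f p then (-1) ^ card {u\<in>I. p u \<noteq> u} else 0)"
    proof -
      have "(\<Prod>u\<in>I. Ns u (f u) * Ns (p u) (f u)) =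
          (\<Prod>u\<in>I. if u \<in> dends og (f u) \<and> p u \<in> dends og (f u) then (if u = p u then 1 else -1) else 0)"
        by (rule prod.cong[OF refl]) (simp add: Ns_prod fD)
      also have "\<dots> = (if \<forall>u\<in>I. u \<in> dends og (f u) \<and> p u \<in> dends og (f u)
                        then \<Prod>u\<in>I. (if u = p u then 1 else -1) else 0)"
        by (rule prod_if_all[OF finI])
      also have "(\<Prod>u\<in>I. (if u = p u then 1 else -1)) = (\<Prod>u\<in>{u\<in>I. p u \<noteq> u}. (-1::complex))"
        by (subst prod.inter_filter[OF finI]) (rule prod.cong, auto)
      also have "\<dots> = (-1) ^ card {u\<in>I. p u \<noteq> u}" by simp
      finally show ?thesis by auto
    qed
    show ?thesis using q s by simp
  qed
  have "TT Nq F - TT Ns F = (\<Sum>f\<in>?B. \<Sum>p\<in>?P. of_int (sign p) *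
        ((\<Prod>u\<in>I. Nq u (f u) * Nq (p u) (f u)) - (\<Prod>u\<in>I. Ns u (f u) * Ns (p u) (f u))))"
    unfolding TT_def by (simp add: sum_subtractf[symmetric] algebra_simps)
  also have "\<dots> = (\<Sum>f\<in>?B. \<Sum>p\<in>?P. if ?ad f \<and> ?cp f p then ?phi p else 0)"
    by (intro sum.cong refl) (simp add: tm_eq)
  also have "\<dots> = (\<Sum>f\<in>{g. adm F g}. \<Sum>p\<in>{p. p permutes I \<and> ?cp f p}. ?phi p)"
  proof -
    have "(\<Sum>f\<in>?B. \<Sum>p\<in>?P. if ?ad f \<and> ?cp f p then ?phi p else 0) =
          (\<Sum>f\<in>?B. if ?ad f then \<Sum>p\<in>{p. p permutes I \<and> ?cp f p}. ?phi p else 0)"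
    proof (rule sum.cong[OF refl])
      fix f
      show "(\<Sum>p\<in>?P. if ?ad f \<and> ?cp f p then ?phi p else 0) =
          (if ?ad f then \<Sum>p\<in>{p. p permutes I \<and> ?cp f p}. ?phi p else 0)"
      proof (cases "?ad f")
        case True
        have "(\<Sum>p\<in>?P. if ?cp f p then ?phi p else 0) = (\<Sum>p\<in>{p\<in>?P. ?cp f p}. ?phi p)"
          by (rule sum.inter_filter[OF finP, symmetric])
        thus ?thesis using True by simp
      next
        case False
        hence nf: "\<And>p. \<not> (?ad f \<and> ?cp f p)" by blast
        have z1: "(\<Sum>p\<in>?P. if ?ad f \<and> ?cp f p then ?phi p else 0) = 0"
          by (rule sum.neutral) (simp only: if_not_P[OF nf] ball_simps(1)[symmetric], blast)
        have z2: "(if ?ad f then \<Sum>p\<in>{p. p permutes I \<and> ?cp f p}. ?phi p else 0) = 0"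
          by (rule if_not_P[OF False])
        show ?thesis by (simp only: z1 z2)
      qed
    qed
    also have "\<dots> = (\<Sum>f\<in>{f\<in>?B. ?ad f}. \<Sum>p\<in>{p. p permutes I \<and> ?cp f p}. ?phi p)"
      by (rule sum.inter_filter[OF finB, symmetric])
    also have "{f\<in>?B. ?ad f} = {g. adm F g}"
    proof
      show "{f\<in>?B. ?ad f} \<subseteq> {g. adm F g}"
        unfolding adm_def by (auto simp: PiE_def)
      show "{g. adm F g} \<subseteq> {f\<in>?B. ?ad f}"
        unfolding adm_def using FD by (auto simp: PiE_def)
    qed
    finally show ?thesis .
  qed
  also have "\<dots> = (\<Sum>f\<in>{g. adm F g}. (if \<forall>C\<in>Cyc F. odd (card C) then 2 ^ card (Cyc F) else 0) - (if Cyc F = {} then 1 else (0::complex)))"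
  proof (rule sum.cong[OF refl])
    fix f assume "f \<in> {g. adm F g}"
    hence "admctx X dX A og tm rv F f" using mk_admctx FD by blast
    thus "(\<Sum>p\<in>{p. p permutes I \<and> ?cp f p}. ?phi p) =
      (if \<forall>C\<in>Cyc F. odd (card C) then 2 ^ card (Cyc F) else 0) - (if Cyc F = {} then 1 else (0::complex))"
      by (rule admctx.inner_sum)
  qed
  also have "\<dots> = of_nat (card {g. adm F g}) * ((if \<forall>C\<in>Cyc F. odd (card C) then 2 ^ card (Cyc F) else 0) - (if Cyc F = {} then 1 else (0::complex)))"
    by simp
  also have "\<dots> = (if F \<in> Ttri X dX A og rv then 4 ^ bnum X og F else 0)"
  proof (cases "\<exists>f. adm F f")
    case True
    then obtain f where f: "adm F f" by blast
    have ac: "admctx X dX A og tm rv F f" using mk_admctx FD f by blast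
    have cnt: "card {g. adm F g} = 2 ^ card (Cyc F)" by (rule admctx.card_adm2[OF ac])
    show ?thesis
    proof (cases "F \<in> Ttri X dX A og rv")
      case True
      have c: "Cyc F \<noteq> {}" "\<forall>C\<in>Cyc F. odd (card C)" using Ttri_conv[OF True] by auto
      have H: "F \<in> HQ X dX A og rv" using True unfolding Ttri_def by blast
      have b: "bnum X og F = card (Cyc F)" using hqctx.bnum_eq[OF mk_hqctx[OF H]] .
      have "(2::complex) ^ card (Cyc F) * 2 ^ card (Cyc F) = 4 ^ card (Cyc F)"
        by (simp add: power_mult_distrib[symmetric])
      thus ?thesis using True c cnt b by simp
    next
      case False
      have "\<not> (Cyc F \<noteq> {} \<and> (\<forall>C\<in>Cyc F. odd (card C)))"
        using admctx.adm_Ttri[OF ac] False by blast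
      thus ?thesis using False cnt by auto
    qed
  next
    case False
    hence "{g. adm F g} = {}" by blast
    moreover have "F \<notin> Ttri X dX A og rv"
    proof
      assume "F \<in> Ttri X dX A og rv"
      hence H: "F \<in> HQ X dX A og rv" unfolding Ttri_def by blast
      have "adm F (hqctx.gfun X dX og F)" using hqctx.exists_adm[OF mk_hqctx[OF H]] .
      thus False using False by blast
    qed
    ultimately show ?thesis by simp
  qed
  finally show ?thesis .
qed

end

theorem mainTheorem4:
  fixes X dX :: "'v set" and A :: "'a set"
    and og tm :: "'a \<Rightarrow> 'v" and rv :: "'a \<Rightarrow> 'a"
    and w :: "'a set \<Rightarrow> complex" and V :: "'v \<Rightarrow> complex" and z :: complex
  assumes "sym_digraph X A og tm rv"
    and "digraph_connected X A og tm"
    and "dX \<subset> X"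
  shows "det_on (X - dX) (\<lambda>u v. op_matrix (MV_op A og tm rv w V) u v - (if u = v then z else 0))
       - (-1) ^ card (X - dX) *
         det_on (X - dX) (\<lambda>u v. op_matrix (MV_op A og tm rv w (\<lambda>x. - V x)) u v + (if u = v then z else 0))
     = (\<Sum>H\<in>Ttri X dX A og rv. 4 ^ bnum X og H * WQ A tm rv w V z H)"
proof -
  have S: "setting X dX A og tm rv" using assms(1,3) by unfold_locales auto
  interpret setting X dX A og tm rv by (rule S)
  let ?c = "wQ A tm rv w V z"
  let ?Mq = "\<lambda>u v. op_matrix (MV_op A og tm rv w V) u v - (if u = v then z else 0)"
  let ?Mb = "\<lambda>u v. op_matrix (MV_op A og tm rv w (\<lambda>x. - V x)) u v + (if u = v then z else 0)"
  have q: "det_on I ?Mq = det_on I (\<lambda>u v. \<Sum>e\<in>D. Nq u e * ?c e * Nq v e)"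
    by (rule det_on_cong) (simp add: matrix_q[OF S])
  have s: "(-1) ^ card I * det_on I ?Mb = det_on I (\<lambda>u v. \<Sum>e\<in>D. Ns u e * ?c e * Ns v e)"
  proof -
    have "(-1) ^ card I * det_on I ?Mb = det_on I (\<lambda>u v. - ?Mb u v)"
      by (rule det_on_neg[OF finI, symmetric])
    also have "\<dots> = det_on I (\<lambda>u v. \<Sum>e\<in>D. Ns u e * ?c e * Ns v e)"
      by (rule det_on_cong) (simp add: matrix_s[OF S])
    finally show ?thesis .
  qed
  have cbq: "det_on I (\<lambda>u v. \<Sum>e\<in>D. Nq u e * ?c e * Nq v e) = (\<Sum>F\<in>Pow D. (\<Prod>e\<in>F. ?c e) * TT Nq F)"
    unfolding TT_def by (rule cauchy_binet_gen[OF finI finD])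
  have cbs: "det_on I (\<lambda>u v. \<Sum>e\<in>D. Ns u e * ?c e * Ns v e) = (\<Sum>F\<in>Pow D. (\<Prod>e\<in>F. ?c e) * TT Ns F)"
    unfolding TT_def by (rule cauchy_binet_gen[OF finI finD])
  have "det_on I ?Mq - (-1) ^ card I * det_on I ?Mb =
      (\<Sum>F\<in>Pow D. (\<Prod>e\<in>F. ?c e) * (TT Nq F - TT Ns F))"
    unfolding q s cbq cbs by (simp add: sum_subtractf[symmetric] algebra_simps)
  also have "\<dots> = (\<Sum>F\<in>Pow D. if F \<in> Ttri X dX A og rv then 4 ^ bnum X og F * WQ A tm rv w V z F else 0)"
  proof (rule sum.cong[OF refl])
    fix F assume "F \<in> Pow D"
    hence FD: "F \<subseteq> D" by simp
    show "(\<Prod>e\<in>F. ?c e) * (TT Nq F - TT Ns F) =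
        (if F \<in> Ttri X dX A og rv then 4 ^ bnum X og F * WQ A tm rv w V z F else 0)"
      unfolding TT_diff[OF FD] WQ_def by simp
  qed
  also have "\<dots> = (\<Sum>F\<in>{F\<in>Pow D. F \<in> Ttri X dX A og rv}. 4 ^ bnum X og F * WQ A tm rv w V z F)"
    by (rule sum.inter_filter[OF finite_Pow_iff[THEN iffD2, OF finD], symmetric])
  also have "{F\<in>Pow D. F \<in> Ttri X dX A og rv} = Ttri X dX A og rv"
    unfolding Ttri_def HQ_def by blast
  finally show ?thesis by simp
qed


end
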